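(* Let $p\in(0,1)$ be fixed (not depending on $n$) and let $A$ be the adjacency matrix of an Erdős–Rényi graph $ER(n,p)$. Let $T$ be the number of triangles and $S$ the number of connected triples of $A$, and let $C=3T/S$ be its global clustering coefficient. Define \[ \Sigma=3(n-2)\binom{n}{3}p(1-p)\begin{pmatrix}4p^2+\frac{p(1-p)}{n-2} & 2p^3+\frac{p^2(1-p)}{n-2}\\[2pt] 2p^3+\frac{p^2(1-p)}{n-2} & p^4+\frac{p^2(1+p-2p^2)}{3(n-2)}\end{pmatrix}, \] and \[ \sigma_n^2=\frac{1}{\binom{n}{3}^2}\left(\frac{\Sigma_{22}}{p^6}+\frac{\Sigma_{11}}{9p^4}-\frac{2\Sigma_{12}}{3p^5}\right). \] Then, as $n\to\infty$, $C$ is asymptotically distributed as $\mathrm{LogNormal}(\log p,\sigma_n^2)$, in the sense that $(\log C-\log p)/\sigma_n$ converges in distribution to the standard normal $N(0,1)$.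
   Context: $ER(n,p)$: simple undirected graph on $n$ vertices in which each of the $\binom n2$ pairs is an edge independently with probability $p$. A connected triple on vertices $\{i,j,k\}$ is a set of at least two of the three possible edges among them; $S=3T+V$, where $T$ is the number of triangles (closed triples) and $V$ the number of open triples (vertex triples spanning exactly two edges). $\mathrm{LogNormal}(\mu,\sigma^2)$ denotes the law of $e^Z$ with $Z\sim N(\mu,\sigma^2)$. *)

theory Defs
  imports "HOL-Probability.Probability"
begin

text \<open>Vertices of ER(n,p) are 0..n-1. A graph is given by its edge indicator on
  unordered pairs, represented as pairs (i,j) with i < j < n.\<close>

definition vpairs :: "nat \<Rightarrow> (nat \<times> nat) set" where
  "vpairs n = {(i, j). i < j \<and> j < n}"

definition ER :: "nat \<Rightarrow> real \<Rightarrow> (nat \<times> nat \<Rightarrow> bool) pmf" where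
  "ER n p = Pi_pmf (vpairs n) False (\<lambda>_. bernoulli_pmf p)"

definition adj :: "(nat \<times> nat \<Rightarrow> bool) \<Rightarrow> nat \<Rightarrow> nat \<Rightarrow> bool" where
  "adj G i j = (if i < j then G (i, j) else if j < i then G (j, i) else False)"

definition triples :: "nat \<Rightarrow> (nat \<times> nat \<times> nat) set" where
  "triples n = {(i, j, k). i < j \<and> j < k \<and> k < n}"

definition edges_in :: "(nat \<times> nat \<Rightarrow> bool) \<Rightarrow> nat \<Rightarrow> nat \<Rightarrow> nat \<Rightarrow> nat" where
  "edges_in G i j k = of_bool (adj G i j) + of_bool (adj G j k) + of_bool (adj G i k)"

definition triangles :: "nat \<Rightarrow> (nat \<times> nat \<Rightarrow> bool) \<Rightarrow> nat" where
  "triangles n G = card {(i, j, k) \<in> triples n. edges_in G i j k = 3}"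

definition open_triples :: "nat \<Rightarrow> (nat \<times> nat \<Rightarrow> bool) \<Rightarrow> nat" where
  "open_triples n G = card {(i, j, k) \<in> triples n. edges_in G i j k = 2}"

definition conn_triples :: "nat \<Rightarrow> (nat \<times> nat \<Rightarrow> bool) \<Rightarrow> nat" where
  "conn_triples n G = 3 * triangles n G + open_triples n G"

definition clustering :: "nat \<Rightarrow> (nat \<times> nat \<Rightarrow> bool) \<Rightarrow> real" where
  "clustering n G = 3 * real (triangles n G) / real (conn_triples n G)"

definition Sig_pref :: "nat \<Rightarrow> real \<Rightarrow> real" where
  "Sig_pref n p = 3 * (real n - 2) * real (n choose 3) * p * (1 - p)"

definition Sig11 :: "nat \<Rightarrow> real \<Rightarrow> real" where
  "Sig11 n p = Sig_pref n p * (4 * p^2 + p * (1 - p) / (real n - 2))"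

definition Sig12 :: "nat \<Rightarrow> real \<Rightarrow> real" where
  "Sig12 n p = Sig_pref n p * (2 * p^3 + p^2 * (1 - p) / (real n - 2))"

definition Sig22 :: "nat \<Rightarrow> real \<Rightarrow> real" where
  "Sig22 n p = Sig_pref n p * (p^4 + p^2 * (1 + p - 2 * p^2) / (3 * (real n - 2)))"

definition sigma_sq :: "nat \<Rightarrow> real \<Rightarrow> real" where
  "sigma_sq n p = (1 / real (n choose 3) ^ 2) *
     (Sig22 n p / p^6 + Sig11 n p / (9 * p^4) - 2 * Sig12 n p / (3 * p^5))"

end

theory Submission
  imports Defs
begin


definition xi :: "real \<Rightarrow> bool \<Rightarrow> real" where "xi p b = of_bool b - p"

lemma finite_vpairs[simp]: "finite (vpairs n)"
proof -
  have "vpairs n \<subseteq> {..<n} \<times> {..<n}" by (auto simp: vpairs_def)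
  thus ?thesis by (rule finite_subset) auto
qed

lemma finite_set_ER: "finite (set_pmf (ER n p))"
  unfolding ER_def by (simp add: set_Pi_pmf finite_PiE_dflt)

lemma integrable_ER[simp]: "integrable (measure_pmf (ER n p)) (f :: _ \<Rightarrow> real)"
  by (rule integrable_measure_pmf_finite[OF finite_set_ER])

lemma ER_component:
  assumes "e \<in> vpairs n"
  shows "measure_pmf.expectation (ER n p) (\<lambda>G. f (G e)) = measure_pmf.expectation (bernoulli_pmf p) (f :: bool \<Rightarrow> real)"
proof -
  have "measure_pmf.expectation (ER n p) (\<lambda>G. f (G e)) = measure_pmf.expectation (map_pmf (\<lambda>G. G e) (ER n p)) f"
    by simp
  also have "map_pmf (\<lambda>G. G e) (ER n p) = bernoulli_pmf p"
    unfolding ER_def using assms by (subst Pi_pmf_component) auto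
  finally show ?thesis .
qed

lemma ER_indep_prod:
  fixes g :: "nat \<times> nat \<Rightarrow> bool \<Rightarrow> real"
  shows "measure_pmf.expectation (ER n p) (\<lambda>G. \<Prod>e\<in>vpairs n. g e (G e)) =
         (\<Prod>e\<in>vpairs n. measure_pmf.expectation (bernoulli_pmf p) (g e))"
proof -
  have ind: "prob_space.indep_vars (measure_pmf (ER n p)) (\<lambda>_. borel) (\<lambda>e G. g e (G e)) (vpairs n)"
    unfolding ER_def
    by (rule prob_space.indep_vars_compose2[OF measure_pmf.prob_space_axioms indep_vars_Pi_pmf]) auto
  have "measure_pmf.expectation (ER n p) (\<lambda>G. \<Prod>e\<in>vpairs n. g e (G e)) =
         (\<Prod>e\<in>vpairs n. measure_pmf.expectation (ER n p) (\<lambda>G. g e (G e)))"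
    by (rule prob_space.indep_vars_lebesgue_integral[OF measure_pmf.prob_space_axioms finite_vpairs ind]) simp
  also have "\<dots> = (\<Prod>e\<in>vpairs n. measure_pmf.expectation (bernoulli_pmf p) (g e))"
    by (intro prod.cong refl ER_component)
  finally show ?thesis .
qed

lemma moment:
  assumes p: "0 \<le> p" "p \<le> 1" and AB: "A \<subseteq> vpairs n" "B \<subseteq> vpairs n"
  shows "measure_pmf.expectation (ER n p) (\<lambda>G. (\<Prod>e\<in>A. xi p (G e)) * (\<Prod>e\<in>B. xi p (G e)))
         = (if A = B then (p * (1 - p)) ^ card A else 0)"
proof -
  define g where "g e b = (if e \<in> A then xi p b else 1) * (if e \<in> B then xi p b else 1)" for e b
  have fA: "finite A" "finite B" using AB by (auto intro: finite_subset)
  have eq: "(\<Prod>e\<in>A. xi p (G e)) * (\<Prod>e\<in>B. xi p (G e)) = (\<Prod>e\<in>vpairs n. g e (G e))" for G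
  proof -
    have "(\<Prod>e\<in>vpairs n. g e (G e)) = (\<Prod>e\<in>vpairs n. if e \<in> A then xi p (G e) else 1) * (\<Prod>e\<in>vpairs n. if e \<in> B then xi p (G e) else 1)"
      unfolding g_def by (rule prod.distrib)
    also have "\<dots> = (\<Prod>e\<in>A. xi p (G e)) * (\<Prod>e\<in>B. xi p (G e))"
      using AB by (simp add: prod.inter_restrict[symmetric] Int_absorb1 Int_absorb2)
    finally show ?thesis by simp
  qed
  have Eg: "measure_pmf.expectation (bernoulli_pmf p) (g e) =
     (if e \<in> A \<and> e \<in> B then p * (1 - p) else if e \<in> A \<or> e \<in> B then 0 else 1)" for e
    using p unfolding g_def xi_def by (auto simp: algebra_simps power2_eq_square)
  have "measure_pmf.expectation (ER n p) (\<lambda>G. (\<Prod>e\<in>A. xi p (G e)) * (\<Prod>e\<in>B. xi p (G e)))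
      = (\<Prod>e\<in>vpairs n. measure_pmf.expectation (bernoulli_pmf p) (g e))"
    unfolding eq by (rule ER_indep_prod)
  also have "\<dots> = (if A = B then (p * (1 - p)) ^ card A else 0)"
  proof (cases "A = B")
    case True
    have "(\<Prod>e\<in>vpairs n. measure_pmf.expectation (bernoulli_pmf p) (g e)) = (\<Prod>e\<in>vpairs n. if e \<in> A then p * (1 - p) else 1)"
      unfolding Eg using True by (intro prod.cong) auto
    also have "\<dots> = (\<Prod>e\<in>A. p * (1 - p))"
      using AB by (simp add: prod.inter_restrict[symmetric] Int_absorb1)
    finally show ?thesis using True by simp
  next
    case False
    then obtain e where e: "e \<in> vpairs n" "(e \<in> A) \<noteq> (e \<in> B)" using AB by blast
    hence "measure_pmf.expectation (bernoulli_pmf p) (g e) = 0" unfolding Eg by auto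
    hence "(\<Prod>e\<in>vpairs n. measure_pmf.expectation (bernoulli_pmf p) (g e)) = 0"
      using e(1) by (intro prod_zero) auto
    thus ?thesis using False by simp
  qed
  finally show ?thesis .
qed


lemma second_moment:
  fixes c :: "'i \<Rightarrow> real" and Bs :: "'i \<Rightarrow> (nat \<times> nat) set"
  assumes p: "0 \<le> p" "p \<le> 1" and I: "finite I" and B: "\<And>i. i \<in> I \<Longrightarrow> Bs i \<subseteq> vpairs n"
    and inj: "inj_on Bs I"
  shows "measure_pmf.expectation (ER n p) (\<lambda>G. (\<Sum>i\<in>I. c i * (\<Prod>e\<in>Bs i. xi p (G e)))\<^sup>2)
       = (\<Sum>i\<in>I. (c i)\<^sup>2 * (p * (1 - p)) ^ card (Bs i))"
proof -
  have sq: "(\<Sum>i\<in>I. c i * (\<Prod>e\<in>Bs i. xi p (G e)))\<^sup>2 =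
      (\<Sum>i\<in>I. \<Sum>j\<in>I. c i * c j * ((\<Prod>e\<in>Bs i. xi p (G e)) * (\<Prod>e\<in>Bs j. xi p (G e))))" for G
    by (simp add: power2_eq_square sum_product algebra_simps)
  have "measure_pmf.expectation (ER n p) (\<lambda>G. (\<Sum>i\<in>I. c i * (\<Prod>e\<in>Bs i. xi p (G e)))\<^sup>2)
     = (\<Sum>i\<in>I. \<Sum>j\<in>I. c i * c j * measure_pmf.expectation (ER n p) (\<lambda>G. (\<Prod>e\<in>Bs i. xi p (G e)) * (\<Prod>e\<in>Bs j. xi p (G e))))"
    unfolding sq by (simp add: Bochner_Integration.integral_sum)
  also have "\<dots> = (\<Sum>i\<in>I. \<Sum>j\<in>I. if i = j then (c i)\<^sup>2 * (p * (1 - p)) ^ card (Bs i) else 0)"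
  proof (intro sum.cong refl)
    fix i j assume ij: "i \<in> I" "j \<in> I"
    have "(Bs i = Bs j) = (i = j)" using inj ij by (auto dest: inj_onD)
    thus "c i * c j * measure_pmf.expectation (ER n p) (\<lambda>G. (\<Prod>e\<in>Bs i. xi p (G e)) * (\<Prod>e\<in>Bs j. xi p (G e))) =
          (if i = j then (c i)\<^sup>2 * (p * (1 - p)) ^ card (Bs i) else 0)"
      using moment[OF p B[OF ij(1)] B[OF ij(2)]] by (simp add: power2_eq_square)
  qed
  also have "\<dots> = (\<Sum>i\<in>I. (c i)\<^sup>2 * (p * (1 - p)) ^ card (Bs i))"
    using I by (simp add: sum.delta)
  finally show ?thesis .
qed

lemma second_moment_le:
  fixes c :: "'i \<Rightarrow> real" and Bs :: "'i \<Rightarrow> (nat \<times> nat) set"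
  assumes p: "0 \<le> p" "p \<le> 1" and I: "finite I" and B: "\<And>i. i \<in> I \<Longrightarrow> Bs i \<subseteq> vpairs n"
    and inj: "inj_on Bs I"
  shows "measure_pmf.expectation (ER n p) (\<lambda>G. (\<Sum>i\<in>I. c i * (\<Prod>e\<in>Bs i. xi p (G e)))\<^sup>2)
       \<le> (\<Sum>i\<in>I. (c i)\<^sup>2)"
proof -
  have q: "0 \<le> p * (1 - p)" "p * (1 - p) \<le> 1" using p by (auto simp: mult_le_one)
  have "(\<Sum>i\<in>I. (c i)\<^sup>2 * (p * (1 - p)) ^ card (Bs i)) \<le> (\<Sum>i\<in>I. (c i)\<^sup>2)"
    by (intro sum_mono mult_left_le) (use q in \<open>auto simp: power_le_one\<close>)
  thus ?thesis using second_moment[OF assms, of c] by simp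
qed


lemma vpairs_Suc: "vpairs (Suc n) = vpairs n \<union> (\<lambda>i. (i, n)) ` {..<n}"
  by (auto simp: vpairs_def)

lemma sum_vpairs: "(\<Sum>e\<in>vpairs n. f e) = (\<Sum>j<n. \<Sum>i<j. f (i, j))"
proof (induction n)
  case 0 thus ?case by (simp add: vpairs_def)
next
  case (Suc n)
  have d: "vpairs n \<inter> (\<lambda>i. (i, n)) ` {..<n} = {}" by (auto simp: vpairs_def)
  have "(\<Sum>e\<in>vpairs (Suc n). f e) = (\<Sum>e\<in>vpairs n. f e) + (\<Sum>e\<in>(\<lambda>i. (i, n)) ` {..<n}. f e)"
    unfolding vpairs_Suc by (rule sum.union_disjoint) (use d in auto)
  also have "(\<Sum>e\<in>(\<lambda>i. (i, n)) ` {..<n}. f e) = (\<Sum>i<n. f (i, n))"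
    by (subst sum.reindex) (auto simp: inj_on_def)
  finally show ?case using Suc by simp
qed

lemma triples_Suc: "triples (Suc n) = triples n \<union> (\<lambda>(i, j). (i, j, n)) ` vpairs n"
proof (rule set_eqI)
  fix t :: "nat \<times> nat \<times> nat"
  obtain i j k where t: "t = (i, j, k)" by (cases t) auto
  show "t \<in> triples (Suc n) \<longleftrightarrow> t \<in> triples n \<union> (\<lambda>(i, j). (i, j, n)) ` vpairs n"
    unfolding t by (cases "k = n") (auto simp: triples_def vpairs_def image_iff)
qed

lemma finite_triples[simp]: "finite (triples n)"
proof -
  have "triples n \<subseteq> {..<n} \<times> {..<n} \<times> {..<n}" by (auto simp: triples_def)
  thus ?thesis by (rule finite_subset) auto
qed

lemma sum_triples: "(\<Sum>t\<in>triples n. f t) = (\<Sum>k<n. \<Sum>j<k. \<Sum>i<j. f (i, j, k))"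
proof (induction n)
  case 0
  have "triples 0 = {}" by (auto simp: triples_def)
  thus ?case by simp
next
  case (Suc n)
  have d: "triples n \<inter> (\<lambda>(i, j). (i, j, n)) ` vpairs n = {}" by (auto simp: triples_def)
  have "(\<Sum>t\<in>triples (Suc n). f t) = (\<Sum>t\<in>triples n. f t) + (\<Sum>t\<in>(\<lambda>(i, j). (i, j, n)) ` vpairs n. f t)"
    unfolding triples_Suc by (rule sum.union_disjoint) (use d in auto)
  also have "(\<Sum>t\<in>(\<lambda>(i, j). (i, j, n)) ` vpairs n. f t) = (\<Sum>e\<in>vpairs n. f (fst e, snd e, n))"
    by (subst sum.reindex) (auto simp: inj_on_def intro!: sum.cong)
  also have "\<dots> = (\<Sum>j<n. \<Sum>i<j. f (i, j, n))" using sum_vpairs[of "\<lambda>e. f (fst e, snd e, n)" n] by simp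
  finally show ?case using Suc by simp
qed

lemma sum_swap_aux: "(\<Sum>j<n. \<Sum>i<j. h i) = (\<Sum>i<n. (real n - 1 - real i) * (h i :: real))"
proof (induction n)
  case 0 thus ?case by simp
next
  case (Suc n)
  have "(\<Sum>j<Suc n. \<Sum>i<j. h i) = (\<Sum>i<n. (real n - 1 - real i) * h i) + (\<Sum>i<n. h i)"
    using Suc by simp
  also have "\<dots> = (\<Sum>i<n. (real (Suc n) - 1 - real i) * h i)"
    by (simp add: sum.distrib[symmetric] algebra_simps)
  also have "\<dots> = (\<Sum>i<Suc n. (real (Suc n) - 1 - real i) * h i)" by simp
  finally show ?case .
qed

lemma double_count:
  "(\<Sum>k<n. \<Sum>j<k. \<Sum>i<j. g (i, j) + g (j, k) + g (i, k)) = (real n - 2) * (\<Sum>j<n. \<Sum>i<j. (g (i, j) :: real))"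
proof (induction n)
  case 0 thus ?case by simp
next
  case (Suc n)
  let ?P = "\<Sum>j<n. \<Sum>i<j. g (i, j)"
  have a: "(\<Sum>j<n. \<Sum>i<j. g (i, j) + g (j, n) + g (i, n)) =
      ?P + (\<Sum>j<n. real j * g (j, n)) + (\<Sum>i<n. (real n - 1 - real i) * g (i, n))"
    by (simp add: sum.distrib sum_swap_aux[where n=n and h="\<lambda>i. g (i, n)"])
  have b: "(\<Sum>j<n. real j * g (j, n)) + (\<Sum>i<n. (real n - 1 - real i) * g (i, n)) = (real n - 1) * (\<Sum>i<n. g (i, n))"
    by (simp add: sum.distrib[symmetric] sum_distrib_left algebra_simps)
  have "(\<Sum>k<Suc n. \<Sum>j<k. \<Sum>i<j. g (i, j) + g (j, k) + g (i, k)) = (real n - 2) * ?P + (\<Sum>j<n. \<Sum>i<j. g (i, j) + g (j, n) + g (i, n))"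
    using Suc by simp
  also have "\<dots> = (real n - 1) * (?P + (\<Sum>i<n. g (i, n)))"
    using a b by (simp add: algebra_simps)
  also have "\<dots> = (real (Suc n) - 2) * (\<Sum>j<Suc n. \<Sum>i<j. g (i, j))" by simp
  finally show ?case .
qed

lemma card_vpairs_real: "real (card (vpairs n)) = real n * (real n - 1) / 2"
proof -
  have "card (vpairs n) = (\<Sum>j<n. j)" using sum_vpairs[of "\<lambda>_. 1::nat" n] by simp
  hence "real (card (vpairs n)) = (\<Sum>j<n. real j)" by simp
  also have "\<dots> = real n * (real n - 1) / 2"
    by (induction n) (auto simp: field_simps)
  finally show ?thesis .
qed

lemma card_triples_real: "real (card (triples n)) = real n * (real n - 1) * (real n - 2) / 6"
proof -
  have "card (triples n) = (\<Sum>k<n. \<Sum>j<k. j)" using sum_triples[of "\<lambda>_. 1::nat" n] by simp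
  hence "real (card (triples n)) = (\<Sum>k<n. \<Sum>j<k. real j)" by simp
  also have "\<dots> = real n * (real n - 1) * (real n - 2) / 6"
  proof (induction n)
    case 0 thus ?case by simp
  next
    case (Suc n)
    have "(\<Sum>j<n. real j) = real n * (real n - 1) / 2" by (induction n) (auto simp: field_simps)
    thus ?case using Suc by (simp add: field_simps)
  qed
  finally show ?thesis .
qed

lemma choose3_real: "real (n choose 3) = real n * (real n - 1) * (real n - 2) / 6"
proof (induction n)
  case 0 thus ?case by simp
next
  case (Suc n)
  have c2: "real (n choose 2) = real n * (real n - 1) / 2"
  proof (induction n)
    case 0 thus ?case by simp
  next
    case (Suc n)
    have "Suc n choose 2 = (n choose 1) + (n choose 2)"
      by (simp add: numeral_2_eq_2)
    thus ?case using Suc by (simp add: field_simps)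
  qed
  have "Suc n choose 3 = (n choose 2) + (n choose 3)"
    by (simp add: numeral_3_eq_3 numeral_2_eq_2)
  thus ?case using Suc c2 by (simp add: field_simps)
qed


definition Bset :: "nat \<times> nat \<times> nat \<Rightarrow> nat \<Rightarrow> (nat \<times> nat) set" where
  "Bset t r = (case t of (i, j, k) \<Rightarrow>
     if r = 0 then {(i, j), (j, k)} else if r = 1 then {(j, k), (i, k)}
     else if r = 2 then {(i, j), (i, k)} else {(i, j), (j, k), (i, k)})"

lemma card_Bset: "(i, j, k) \<in> triples n \<Longrightarrow> r < 4 \<Longrightarrow> card (Bset (i, j, k) r) = (if r = 3 then 3 else 2)"
  by (auto simp: Bset_def triples_def)

lemma inj_Bset_aux:
  assumes t: "(i, j, k) \<in> triples n" "(i', j', k') \<in> triples n" and r: "r < 4" "r' < 4"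
    and eq: "Bset (i, j, k) r = Bset (i', j', k') r'"
  shows "i = i' \<and> j = j' \<and> k = k' \<and> r = r'"
proof -
  from t have o: "i < j" "j < k" "i' < j'" "j' < k'" by (auto simp: triples_def)
  have r3: "(r = 3) = (r' = 3)"
    using card_Bset[OF t(1) r(1)] card_Bset[OF t(2) r(2)] eq by (auto split: if_splits)
  show "i = i' \<and> j = j' \<and> k = k' \<and> r = r'"
  proof (cases "r = 3")
    case True
    with r3 have rr: "r = 3" "r' = 3" by auto
    have "{(i, j), (j, k), (i, k)} = {(i', j'), (j', k'), (i', k')}" using eq rr by (simp add: Bset_def)
    hence "(i, j) \<in> {(i', j'), (j', k'), (i', k')}" "(j, k) \<in> {(i', j'), (j', k'), (i', k')}"
       "(i', j') \<in> {(i, j), (j, k), (i, k)}" "(j', k') \<in> {(i, j), (j, k), (i, k)}"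
      by (metis insertI1 insertI2)+
    thus ?thesis using o rr by auto
  next
    case False
    with r3 r have "r = 0 \<or> r = 1 \<or> r = 2" "r' = 0 \<or> r' = 1 \<or> r' = 2" by auto
    thus ?thesis using eq o by (auto simp: Bset_def doubleton_eq_iff)
  qed
qed

lemma inj_Bset: "inj_on (\<lambda>(t, r). Bset t r) (triples n \<times> {..<4})"
  by (rule inj_onI) (use inj_Bset_aux in fastforce)


definition Tsum :: "nat \<Rightarrow> (nat \<times> nat \<Rightarrow> bool) \<Rightarrow> real" where
  "Tsum n G = (\<Sum>(i, j, k)\<in>triples n. of_bool (G (i, j)) * of_bool (G (j, k)) * of_bool (G (i, k)))"

definition Ssum :: "nat \<Rightarrow> (nat \<times> nat \<Rightarrow> bool) \<Rightarrow> real" where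
  "Ssum n G = (\<Sum>(i, j, k)\<in>triples n. of_bool (G (i, j)) * of_bool (G (j, k)) +
       of_bool (G (j, k)) * of_bool (G (i, k)) + of_bool (G (i, j)) * of_bool (G (i, k)))"

lemma card_filter_real: "finite A \<Longrightarrow> real (card {x\<in>A. Q x}) = (\<Sum>x\<in>A. if Q x then 1 else 0)"
  by (simp add: sum.If_cases Int_def)

lemma set_case3: "{(i, j, k). (i, j, k) \<in> A \<and> P i j k} = {x\<in>A. case x of (i, j, k) \<Rightarrow> P i j k}"
  by auto

lemma adj_tr: "(i, j, k) \<in> triples n \<Longrightarrow> adj G i j = G (i, j) \<and> adj G j k = G (j, k) \<and> adj G i k = G (i, k)"
  by (auto simp: adj_def triples_def)

lemma triangles_eq: "real (triangles n G) = Tsum n G"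
proof -
  have "real (triangles n G) = (\<Sum>x\<in>triples n. if (case x of (i, j, k) \<Rightarrow> edges_in G i j k = 3) then 1 else 0)"
    unfolding triangles_def by (subst card_filter_real[symmetric]) (simp_all only: set_case3 finite_triples)
  also have "\<dots> = Tsum n G"
    unfolding Tsum_def
    by (intro sum.cong refl) (auto simp: edges_in_def adj_tr split: prod.splits)
  finally show ?thesis .
qed

lemma conn_eq: "real (conn_triples n G) = Ssum n G"
proof -
  have a: "real (open_triples n G) = (\<Sum>x\<in>triples n. if (case x of (i, j, k) \<Rightarrow> edges_in G i j k = 2) then 1 else 0)"
    unfolding open_triples_def by (subst card_filter_real[symmetric]) (simp_all only: set_case3 finite_triples)
  have b: "real (triangles n G) = (\<Sum>x\<in>triples n. if (case x of (i, j, k) \<Rightarrow> edges_in G i j k = 3) then 1 else 0)"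
    unfolding triangles_def by (subst card_filter_real[symmetric]) (simp_all only: set_case3 finite_triples)
  have "real (conn_triples n G) = 3 * real (triangles n G) + real (open_triples n G)"
    by (simp add: conn_triples_def)
  also have "\<dots> = Ssum n G"
    unfolding a b Ssum_def sum_distrib_left sum.distrib[symmetric]
    by (intro sum.cong refl) (auto simp: edges_in_def adj_tr split: prod.splits)
  finally show ?thesis .
qed


definition Dsum :: "nat \<Rightarrow> real \<Rightarrow> (nat \<times> nat \<Rightarrow> bool) \<Rightarrow> real" where
  "Dsum n p G = (\<Sum>e\<in>vpairs n. xi p (G e))"

definition cU :: "real \<Rightarrow> nat \<Rightarrow> real" where "cU p r = (if r < 3 then p else 1)"
definition cW :: "nat \<Rightarrow> real" where "cW r = (if r < 3 then 1 else 0)"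

definition Usum :: "nat \<Rightarrow> real \<Rightarrow> (nat \<times> nat \<Rightarrow> bool) \<Rightarrow> real" where
  "Usum n p G = (\<Sum>t\<in>triples n. \<Sum>r<4. cU p r * (\<Prod>e\<in>Bset t r. xi p (G e)))"

definition Wsum :: "nat \<Rightarrow> real \<Rightarrow> (nat \<times> nat \<Rightarrow> bool) \<Rightarrow> real" where
  "Wsum n p G = (\<Sum>t\<in>triples n. \<Sum>r<4. cW r * (\<Prod>e\<in>Bset t r. xi p (G e)))"

lemma sum_Bset:
  assumes "(i, j, k) \<in> triples n"
  shows "(\<Sum>r<4. c r * (\<Prod>e\<in>Bset (i, j, k) r. f e)) =
     c 0 * (f (i, j) * f (j, k)) + c 1 * (f (j, k) * f (i, k)) + c 2 * (f (i, j) * f (i, k))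
     + c 3 * (f (i, j) * f (j, k) * f (i, k))"
proof -
  from assms have o: "i < j" "j < k" by (auto simp: triples_def)
  have "{..<4::nat} = {0, 1, 2, 3}" by auto
  thus ?thesis using o by (simp add: Bset_def algebra_simps)
qed

lemma lin_part:
  "(\<Sum>t\<in>triples n. case t of (i, j, k) \<Rightarrow> g (i, j) + g (j, k) + g (i, k)) = (real n - 2) * (\<Sum>e\<in>vpairs n. (g e :: real))"
  by (simp add: sum_triples sum_vpairs double_count)

lemma T_decomp:
  "Tsum n G = real (card (triples n)) * p ^ 3 + p\<^sup>2 * (real n - 2) * Dsum n p G + Usum n p G"
proof -
  let ?g = "\<lambda>e. xi p (G e)"
  have per: "(case t of (i, j, k) \<Rightarrow> of_bool (G (i, j)) * of_bool (G (j, k)) * of_bool (G (i, k))) =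
     p ^ 3 + p\<^sup>2 * (case t of (i, j, k) \<Rightarrow> ?g (i, j) + ?g (j, k) + ?g (i, k)) +
     (\<Sum>r<4. cU p r * (\<Prod>e\<in>Bset t r. ?g e))" if "t \<in> triples n" for t
  proof -
    obtain i j k where t: "t = (i, j, k)" by (cases t) auto
    have "of_bool b = p + xi p b" for b by (simp add: xi_def)
    hence "of_bool (G (i, j)) * of_bool (G (j, k)) * of_bool (G (i, k)) =
       (p + ?g (i, j)) * (p + ?g (j, k)) * (p + ?g (i, k))" by simp
    thus ?thesis using that unfolding t by (subst sum_Bset) (auto simp: cU_def algebra_simps power2_eq_square power3_eq_cube)
  qed
  have "Tsum n G = (\<Sum>t\<in>triples n. p ^ 3 + p\<^sup>2 * (case t of (i, j, k) \<Rightarrow> ?g (i, j) + ?g (j, k) + ?g (i, k)) +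
     (\<Sum>r<4. cU p r * (\<Prod>e\<in>Bset t r. ?g e)))"
    unfolding Tsum_def by (rule sum.cong[OF refl per])
  also have "\<dots> = real (card (triples n)) * p ^ 3 + p\<^sup>2 * (real n - 2) * Dsum n p G + Usum n p G"
    using lin_part[where n=n and g="?g"] by (simp add: sum.distrib sum_distrib_left[symmetric] Dsum_def Usum_def)
  finally show ?thesis .
qed

lemma S_decomp:
  "Ssum n G = real (card (triples n)) * (3 * p\<^sup>2) + 2 * p * (real n - 2) * Dsum n p G + Wsum n p G"
proof -
  let ?g = "\<lambda>e. xi p (G e)"
  have per: "(case t of (i, j, k) \<Rightarrow> of_bool (G (i, j)) * of_bool (G (j, k)) +
       of_bool (G (j, k)) * of_bool (G (i, k)) + of_bool (G (i, j)) * of_bool (G (i, k))) =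
     3 * p\<^sup>2 + 2 * p * (case t of (i, j, k) \<Rightarrow> ?g (i, j) + ?g (j, k) + ?g (i, k)) +
     (\<Sum>r<4. cW r * (\<Prod>e\<in>Bset t r. ?g e))" if "t \<in> triples n" for t
  proof -
    obtain i j k where t: "t = (i, j, k)" by (cases t) auto
    have "of_bool b = p + xi p b" for b by (simp add: xi_def)
    hence "of_bool (G (i, j)) * of_bool (G (j, k)) +
       of_bool (G (j, k)) * of_bool (G (i, k)) + of_bool (G (i, j)) * of_bool (G (i, k)) =
       (p + ?g (i, j)) * (p + ?g (j, k)) + (p + ?g (j, k)) * (p + ?g (i, k)) + (p + ?g (i, j)) * (p + ?g (i, k))" by simp
    thus ?thesis using that unfolding t by (subst sum_Bset) (auto simp: cW_def algebra_simps power2_eq_square)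
  qed
  have "Ssum n G = (\<Sum>t\<in>triples n. 3 * p\<^sup>2 + 2 * p * (case t of (i, j, k) \<Rightarrow> ?g (i, j) + ?g (j, k) + ?g (i, k)) +
     (\<Sum>r<4. cW r * (\<Prod>e\<in>Bset t r. ?g e)))"
    unfolding Ssum_def by (rule sum.cong[OF refl per])
  also have "\<dots> = real (card (triples n)) * (3 * p\<^sup>2) + 2 * p * (real n - 2) * Dsum n p G + Wsum n p G"
    using lin_part[where n=n and g="?g"] by (simp add: sum.distrib sum_distrib_left[symmetric] Dsum_def Wsum_def)
  finally show ?thesis .
qed


lemma Bset_sub: "t \<in> triples n \<Longrightarrow> Bset t r \<subseteq> vpairs n"
  by (cases t) (auto simp: Bset_def triples_def vpairs_def)

lemma ED2:
  assumes "0 \<le> p" "p \<le> 1"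
  shows "measure_pmf.expectation (ER n p) (\<lambda>G. (Dsum n p G)\<^sup>2) = real (card (vpairs n)) * (p * (1 - p))"
proof -
  have "Dsum n p G = (\<Sum>e\<in>vpairs n. 1 * (\<Prod>e'\<in>{e}. xi p (G e')))" for G by (simp add: Dsum_def)
  hence "measure_pmf.expectation (ER n p) (\<lambda>G. (Dsum n p G)\<^sup>2) =
     measure_pmf.expectation (ER n p) (\<lambda>G. (\<Sum>e\<in>vpairs n. (\<lambda>_. 1) e * (\<Prod>e'\<in>(\<lambda>e. {e}) e. xi p (G e')))\<^sup>2)" by simp
  also have "\<dots> = (\<Sum>e\<in>vpairs n. ((\<lambda>_. 1) e)\<^sup>2 * (p * (1 - p)) ^ card ((\<lambda>e. {e}) e))"
    by (rule second_moment) (use assms in \<open>auto simp: inj_on_def\<close>)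
  also have "\<dots> = real (card (vpairs n)) * (p * (1 - p))" by simp
  finally show ?thesis .
qed

lemma sum_pairs4: "(\<Sum>t\<in>triples n. \<Sum>r<4. f t r) = (\<Sum>(t, r)\<in>triples n \<times> {..<4}. f t r)"
  by (simp add: sum.cartesian_product)

lemma EU2:
  assumes "0 \<le> p" "p \<le> 1"
  shows "measure_pmf.expectation (ER n p) (\<lambda>G. (Usum n p G)\<^sup>2) \<le> 4 * real (card (triples n))"
proof -
  have "Usum n p G = (\<Sum>x\<in>triples n \<times> {..<4}. (\<lambda>(t, r). cU p r) x * (\<Prod>e\<in>(\<lambda>(t, r). Bset t r) x. xi p (G e)))" for G
    unfolding Usum_def sum_pairs4 by (simp add: case_prod_beta)
  hence "measure_pmf.expectation (ER n p) (\<lambda>G. (Usum n p G)\<^sup>2) =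
    measure_pmf.expectation (ER n p) (\<lambda>G. (\<Sum>x\<in>triples n \<times> {..<4}. (\<lambda>(t, r). cU p r) x * (\<Prod>e\<in>(\<lambda>(t, r). Bset t r) x. xi p (G e)))\<^sup>2)"
    by simp
  also have "\<dots> \<le> (\<Sum>x\<in>triples n \<times> {..<4}. ((\<lambda>(t, r). cU p r) x)\<^sup>2)"
    by (rule second_moment_le) (use assms inj_Bset Bset_sub in force)+
  also have "\<dots> \<le> (\<Sum>x\<in>triples n \<times> {..<4::nat}. 1::real)"
    by (intro sum_mono) (use assms in \<open>auto simp: cU_def power_le_one\<close>)
  also have "\<dots> = 4 * real (card (triples n))" by (simp add: card_cartesian_product)
  finally show ?thesis .
qed

lemma EW2:
  assumes "0 \<le> p" "p \<le> 1"
  shows "measure_pmf.expectation (ER n p) (\<lambda>G. (Wsum n p G)\<^sup>2) \<le> 4 * real (card (triples n))"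
proof -
  have "Wsum n p G = (\<Sum>x\<in>triples n \<times> {..<4}. (\<lambda>(t, r). cW r) x * (\<Prod>e\<in>(\<lambda>(t, r). Bset t r) x. xi p (G e)))" for G
    unfolding Wsum_def sum_pairs4 by (simp add: case_prod_beta)
  hence "measure_pmf.expectation (ER n p) (\<lambda>G. (Wsum n p G)\<^sup>2) =
    measure_pmf.expectation (ER n p) (\<lambda>G. (\<Sum>x\<in>triples n \<times> {..<4}. (\<lambda>(t, r). cW r) x * (\<Prod>e\<in>(\<lambda>(t, r). Bset t r) x. xi p (G e)))\<^sup>2)"
    by simp
  also have "\<dots> \<le> (\<Sum>x\<in>triples n \<times> {..<4}. ((\<lambda>(t, r). cW r) x)\<^sup>2)"
    by (rule second_moment_le) (use assms inj_Bset Bset_sub in force)+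
  also have "\<dots> \<le> (\<Sum>x\<in>triples n \<times> {..<4::nat}. 1::real)"
    by (intro sum_mono) (use assms in \<open>auto simp: cW_def\<close>)
  also have "\<dots> = 4 * real (card (triples n))" by (simp add: card_cartesian_product)
  finally show ?thesis .
qed


lemma std_normal_cont: "isCont (cdf std_normal_distribution) x"
proof -
  have "emeasure std_normal_distribution {x} = 0"
    by (subst emeasure_density) (auto intro!: nn_integral_null_set)
  thus ?thesis by (simp add: finite_borel_measure.isCont_cdf[OF real_distribution.finite_borel_measure_M[OF real_dist_normal_dist]] measure_def)
qed

locale bern_seq =
  fixes p :: real
  assumes p: "0 < p" "p < 1"
begin

definition Om :: "(nat \<Rightarrow> bool) measure" where
  "Om = PiM UNIV (\<lambda>_. measure_pmf (bernoulli_pmf p))"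

sublocale PP: product_prob_space "\<lambda>_::nat. measure_pmf (bernoulli_pmf p)" UNIV
  by unfold_locales

lemma prob_Om: "prob_space Om"
  unfolding Om_def by (rule PP.P.prob_space_axioms)

lemma coord_indep: "prob_space.indep_vars Om (\<lambda>_. measure_pmf (bernoulli_pmf p)) (\<lambda>i \<omega>. \<omega> i) UNIV"
proof -
  have "distr Om (PiM UNIV (\<lambda>_. measure_pmf (bernoulli_pmf p))) (\<lambda>x. \<lambda>i\<in>UNIV. x i) =
        PiM UNIV (\<lambda>i. distr Om (measure_pmf (bernoulli_pmf p)) (\<lambda>x. x i))"
    unfolding Om_def by (simp add: restrict_UNIV PP.PiM_component)
  thus ?thesis
    by (subst prob_space.indep_vars_iff_distr_eq_PiM'[OF prob_Om]) (auto simp: Om_def)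
qed

end


lemma distr_pmf_pmf:
  assumes "map_pmf f P = Q"
  shows "distr (measure_pmf P) (measure_pmf Q) f = measure_pmf Q"
  by (rule measure_eqI) (auto simp: emeasure_distr assms[symmetric])

lemma Pi_pmf_restrict_distr:
  assumes "finite K"
  shows "distr (measure_pmf (Pi_pmf K False (\<lambda>_. bernoulli_pmf p))) (PiM K (\<lambda>_. measure_pmf (bernoulli_pmf p))) (\<lambda>f. restrict f K)
       = PiM K (\<lambda>_. measure_pmf (bernoulli_pmf p))"
proof (cases "K = {}")
  case True
  show ?thesis
  proof (rule measure_eqI)
    show "sets (distr (measure_pmf (Pi_pmf K False (\<lambda>_. bernoulli_pmf p))) (PiM K (\<lambda>_. measure_pmf (bernoulli_pmf p))) (\<lambda>f. restrict f K)) =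
      sets (PiM K (\<lambda>_. measure_pmf (bernoulli_pmf p)))" by simp
    fix A assume A: "A \<in> sets (distr (measure_pmf (Pi_pmf K False (\<lambda>_. bernoulli_pmf p))) (PiM K (\<lambda>_. measure_pmf (bernoulli_pmf p))) (\<lambda>f. restrict f K))"
    hence A': "A \<in> sets (PiM {} (\<lambda>_. measure_pmf (bernoulli_pmf p)))" using True by simp
    hence "A = {} \<or> A = {\<lambda>_. undefined}" by (simp add: sets_PiM_empty)
    thus "emeasure (distr (measure_pmf (Pi_pmf K False (\<lambda>_. bernoulli_pmf p))) (PiM K (\<lambda>_. measure_pmf (bernoulli_pmf p))) (\<lambda>f. restrict f K)) A =
      emeasure (PiM K (\<lambda>_. measure_pmf (bernoulli_pmf p))) A"
    proof
      assume "A = {}" thus ?thesis by simp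
    next
      assume A1: "A = {\<lambda>_. undefined}"
      have pre: "(\<lambda>f. restrict f {}) -` {\<lambda>_. undefined} = UNIV" by (auto simp: restrict_def)
      have "emeasure (distr (measure_pmf (Pi_pmf K False (\<lambda>_. bernoulli_pmf p))) (PiM K (\<lambda>_. measure_pmf (bernoulli_pmf p))) (\<lambda>f. restrict f K)) A = 1"
        using True A' A1 by (subst emeasure_distr) (auto simp: space_PiM pre)
      thus ?thesis using True A1 by (simp add: emeasure_PiM_empty)
    qed
  qed
next
  case False
  have ind: "prob_space.indep_vars (measure_pmf (Pi_pmf K False (\<lambda>_. bernoulli_pmf p))) (\<lambda>_. measure_pmf (bernoulli_pmf p)) (\<lambda>x f. f x) K"
    using prob_space.indep_vars_compose2[OF measure_pmf.prob_space_axioms indep_vars_Pi_pmf[OF assms], of "\<lambda>_ x. x" "\<lambda>_. measure_pmf (bernoulli_pmf p)" False "\<lambda>_. bernoulli_pmf p"]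
    by simp
  have comp: "distr (measure_pmf (Pi_pmf K False (\<lambda>_. bernoulli_pmf p))) (measure_pmf (bernoulli_pmf p)) (\<lambda>f. f i) = measure_pmf (bernoulli_pmf p)"
    if "i \<in> K" for i
    by (rule distr_pmf_pmf) (use that assms in \<open>simp add: Pi_pmf_component\<close>)
  have "distr (measure_pmf (Pi_pmf K False (\<lambda>_. bernoulli_pmf p))) (PiM K (\<lambda>_. measure_pmf (bernoulli_pmf p))) (\<lambda>x. \<lambda>i\<in>K. x i)
      = PiM K (\<lambda>i. distr (measure_pmf (Pi_pmf K False (\<lambda>_. bernoulli_pmf p))) (measure_pmf (bernoulli_pmf p)) (\<lambda>f. f i))"
    using prob_space.indep_vars_iff_distr_eq_PiM'[OF measure_pmf.prob_space_axioms False, where M'="\<lambda>_. measure_pmf (bernoulli_pmf p)" and X="\<lambda>x f. f x"] ind by simp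
  also have "\<dots> = PiM K (\<lambda>_. measure_pmf (bernoulli_pmf p))"
    by (rule PiM_cong) (auto simp: comp)
  finally show ?thesis by (simp add: restrict_def)
qed


context bern_seq begin

lemma transfer_restrict:
  fixes g :: "(nat \<Rightarrow> bool) \<Rightarrow> real"
  assumes K: "finite K" and g: "g \<in> borel_measurable (PiM K (\<lambda>_. measure_pmf (bernoulli_pmf p)))"
  shows "measure Om {\<omega>\<in>space Om. g (restrict \<omega> K) \<le> x} =
         measure_pmf.prob (Pi_pmf K False (\<lambda>_. bernoulli_pmf p)) {f. g (restrict f K) \<le> x}"
proof -
  let ?M = "PiM K (\<lambda>_. measure_pmf (bernoulli_pmf p))"
  define A where "A = {h\<in>space ?M. g h \<le> x}"
  have A: "A \<in> sets ?M" unfolding A_def using g by measurable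
  have r1: "(\<lambda>\<omega>. restrict \<omega> K) \<in> measurable Om ?M"
    unfolding Om_def by (rule measurable_restrict_subset) simp
  have r2: "(\<lambda>\<omega>. restrict \<omega> K) \<in> measurable (measure_pmf (Pi_pmf K False (\<lambda>_. bernoulli_pmf p))) ?M"
    by (simp add: space_PiM)
  have "measure Om {\<omega>\<in>space Om. g (restrict \<omega> K) \<le> x} = measure Om ((\<lambda>\<omega>. restrict \<omega> K) -` A \<inter> space Om)"
    by (intro arg_cong[where f="measure Om"]) (auto simp: Om_def space_PiM A_def)
  also have "\<dots> = measure (distr Om ?M (\<lambda>\<omega>. restrict \<omega> K)) A"
    by (rule measure_distr[symmetric, OF r1 A])
  also have "distr Om ?M (\<lambda>\<omega>. restrict \<omega> K) = ?M"
    unfolding Om_def by (rule PP.distr_PiM_restrict_finite) (use K in auto)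
  also have "\<dots> = distr (measure_pmf (Pi_pmf K False (\<lambda>_. bernoulli_pmf p))) ?M (\<lambda>f. restrict f K)"
    by (rule Pi_pmf_restrict_distr[OF K, symmetric])
  also have "measure \<dots> A = measure (measure_pmf (Pi_pmf K False (\<lambda>_. bernoulli_pmf p))) ((\<lambda>\<omega>. restrict \<omega> K) -` A \<inter> space (measure_pmf (Pi_pmf K False (\<lambda>_. bernoulli_pmf p))))"
    by (rule measure_distr[OF r2 A])
  also have "(\<lambda>\<omega>. restrict \<omega> K) -` A \<inter> space (measure_pmf (Pi_pmf K False (\<lambda>_. bernoulli_pmf p))) = {f. g (restrict f K) \<le> x}"
    by (auto simp: space_PiM A_def)
  finally show ?thesis .
qed

end


context bern_seq begin

definition Xb :: "nat \<Rightarrow> (nat \<Rightarrow> bool) \<Rightarrow> real" where "Xb i \<omega> = of_bool (\<omega> i)"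

lemma comp_meas: "(\<lambda>\<omega>. \<omega> i) \<in> measurable Om (measure_pmf (bernoulli_pmf p))"
  unfolding Om_def by (rule measurable_component_singleton) simp

lemma Xb_meas[measurable]: "Xb i \<in> borel_measurable Om"
  unfolding Xb_def by (rule measurable_compose[OF comp_meas]) simp

lemma comp_distr: "distr Om (measure_pmf (bernoulli_pmf p)) (\<lambda>\<omega>. \<omega> i) = measure_pmf (bernoulli_pmf p)"
  unfolding Om_def by (rule PP.PiM_component) simp

lemma int_comp: "integral\<^sup>L Om (\<lambda>\<omega>. f (\<omega> i)) = measure_pmf.expectation (bernoulli_pmf p) (f :: bool \<Rightarrow> real)"
proof -
  have "integral\<^sup>L (distr Om (measure_pmf (bernoulli_pmf p)) (\<lambda>\<omega>. \<omega> i)) f = integral\<^sup>L Om (\<lambda>\<omega>. f (\<omega> i))"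
    by (rule integral_distr[OF comp_meas]) simp
  thus ?thesis by (simp add: comp_distr)
qed

lemma integrable_comp: "integrable Om (\<lambda>\<omega>. f (\<omega> i) :: real)"
proof -
  have "integrable (distr Om (measure_pmf (bernoulli_pmf p)) (\<lambda>\<omega>. \<omega> i)) f"
    unfolding comp_distr by (rule integrable_measure_pmf_finite) simp
  thus ?thesis by (subst (asm) integrable_distr_eq[OF comp_meas]) simp_all
qed

lemma Xb_indep: "prob_space.indep_vars Om (\<lambda>_. borel) Xb UNIV"
  unfolding Xb_def
  by (rule prob_space.indep_vars_compose2[OF prob_Om coord_indep]) simp

lemma clt_Om: "weak_conv_m (\<lambda>k. distr Om borel (\<lambda>x. (\<Sum>i<k. Xb i x - p) / sqrt (real k * (sqrt (p * (1 - p)))\<^sup>2)))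
     std_normal_distribution"
proof (rule prob_space.central_limit_theorem[OF prob_Om Xb_indep])
  show "prob_space.expectation Om (Xb n) = p" for n
    unfolding Xb_def using p by (simp add: int_comp)
  show "0 < sqrt (p * (1 - p))" using p by simp
  show "integrable Om (\<lambda>x. (Xb n x)\<^sup>2)" for n
    unfolding Xb_def by (rule integrable_comp)
  show "prob_space.variance Om (Xb n) = (sqrt (p * (1 - p)))\<^sup>2" for n
  proof -
    have "prob_space.expectation Om (Xb n) = p" unfolding Xb_def using p by (simp add: int_comp)
    define g where "g b = (of_bool b - p)\<^sup>2" for b
    have "prob_space.variance Om (Xb n) = integral\<^sup>L Om (\<lambda>\<omega>. g (\<omega> n))"
      using \<open>prob_space.expectation Om (Xb n) = p\<close> by (simp add: Xb_def g_def)
    also have "\<dots> = p * (1 - p)" unfolding int_comp using p by (simp add: g_def power2_eq_square algebra_simps)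
    finally show ?thesis using p by simp
  qed
  show "distr Om borel (Xb n) = distr (measure_pmf (bernoulli_pmf p)) borel of_bool" for n
  proof -
    have "distr (distr Om (measure_pmf (bernoulli_pmf p)) (\<lambda>\<omega>. \<omega> n)) borel (of_bool :: bool \<Rightarrow> real) = distr Om borel (of_bool \<circ> (\<lambda>\<omega>. \<omega> n))"
      by (rule distr_distr[OF _ comp_meas]) simp
    moreover have "Xb n = (\<lambda>x. of_bool (x n))" by (simp add: Xb_def fun_eq_iff)
    ultimately show ?thesis by (simp add: comp_distr comp_def)
  qed
qed

end


context bern_seq begin

lemma gk_meas: "(\<lambda>h. (\<Sum>i<k. of_bool (h i) - p) / c) \<in> borel_measurable (PiM {..<k} (\<lambda>_. measure_pmf (bernoulli_pmf p)))"
proof -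
  have "(\<lambda>h. \<Sum>i<k. (of_bool (h i) - p :: real)) \<in> borel_measurable (PiM {..<k} (\<lambda>_. measure_pmf (bernoulli_pmf p)))"
  proof (rule borel_measurable_sum)
    fix i assume "i \<in> {..<k}"
    hence "(\<lambda>h. h i) \<in> measurable (PiM {..<k} (\<lambda>_. measure_pmf (bernoulli_pmf p))) (measure_pmf (bernoulli_pmf p))"
      by (intro measurable_component_singleton)
    thus "(\<lambda>h. of_bool (h i) - p :: real) \<in> borel_measurable (PiM {..<k} (\<lambda>_. measure_pmf (bernoulli_pmf p)))"
      by (rule measurable_compose) simp
  qed
  thus ?thesis by measurable
qed

lemma sum_card: "(\<Sum>i<k. of_bool (f i) - p) = real (card {i\<in>{..<k}. f i}) - real k * p"
proof -
  have "real (card {i\<in>{..<k}. f i}) = (\<Sum>i<k. if f i then 1 else 0)" by (rule card_filter_real) simp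
  thus ?thesis by (simp add: sum_subtractf of_bool_def)
qed

lemma clt_binom:
  "(\<lambda>k. measure_pmf.prob (binomial_pmf k p) {j. (real j - real k * p) / sqrt (real k * (p * (1 - p))) \<le> x})
     \<longlonglongrightarrow> cdf std_normal_distribution x"
proof -
  let ?c = "\<lambda>k. sqrt (real k * (sqrt (p * (1 - p)))\<^sup>2)"
  have lim: "(\<lambda>k. cdf (distr Om borel (\<lambda>x. (\<Sum>i<k. Xb i x - p) / ?c k)) x) \<longlonglongrightarrow> cdf std_normal_distribution x"
    using clt_Om std_normal_cont unfolding weak_conv_m_def weak_conv_def by blast
  have eq: "cdf (distr Om borel (\<lambda>x. (\<Sum>i<k. Xb i x - p) / ?c k)) x =
        measure_pmf.prob (binomial_pmf k p) {j. (real j - real k * p) / sqrt (real k * (p * (1 - p))) \<le> x}" for k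
  proof -
    have fm: "(\<lambda>x. (\<Sum>i<k. Xb i x - p) / ?c k) \<in> borel_measurable Om" by measurable
    have "cdf (distr Om borel (\<lambda>x. (\<Sum>i<k. Xb i x - p) / ?c k)) x =
       measure Om ((\<lambda>x. (\<Sum>i<k. Xb i x - p) / ?c k) -` {..x} \<inter> space Om)"
      unfolding cdf_def by (rule measure_distr[OF fm]) simp
    also have "\<dots> = measure Om {\<omega>\<in>space Om. (\<lambda>h. (\<Sum>i<k. of_bool (h i) - p) / ?c k) (restrict \<omega> {..<k}) \<le> x}"
      by (intro arg_cong[where f="measure Om"]) (auto simp: Xb_def)
    also have "\<dots> = measure_pmf.prob (Pi_pmf {..<k} False (\<lambda>_. bernoulli_pmf p)) {f. (\<lambda>h. (\<Sum>i<k. of_bool (h i) - p) / ?c k) (restrict f {..<k}) \<le> x}"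
      by (rule transfer_restrict[OF _ gk_meas]) simp
    also have "\<dots> = measure_pmf.prob (Pi_pmf {..<k} False (\<lambda>_. bernoulli_pmf p)) ((\<lambda>f. card {i\<in>{..<k}. f i}) -` {j. (real j - real k * p) / sqrt (real k * (p * (1 - p))) \<le> x})"
      using p by (intro arg_cong[where f="measure_pmf.prob _"]) (auto simp: sum_card)
    also have "\<dots> = measure_pmf.prob (map_pmf (\<lambda>f. card {i\<in>{..<k}. f i}) (Pi_pmf {..<k} False (\<lambda>_. bernoulli_pmf p))) {j. (real j - real k * p) / sqrt (real k * (p * (1 - p))) \<le> x}"
      by simp
    also have "map_pmf (\<lambda>f. card {i\<in>{..<k}. f i}) (Pi_pmf {..<k} False (\<lambda>_. bernoulli_pmf p)) = binomial_pmf k p"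
      by (rule binomial_pmf_altdef'[symmetric]) (use p in auto)
    finally show ?thesis .
  qed
  show ?thesis using lim unfolding eq .
qed

end


lemma slutsky:
  fixes P :: "nat \<Rightarrow> 'a pmf" and Y Z :: "nat \<Rightarrow> 'a \<Rightarrow> real" and F :: "real \<Rightarrow> real"
  assumes cont: "\<And>x. isCont F x"
    and Zc: "\<And>x. (\<lambda>n. measure_pmf.prob (P n) {\<omega>. Z n \<omega> \<le> x}) \<longlonglongrightarrow> F x"
    and R: "\<And>e. e > 0 \<Longrightarrow> (\<lambda>n. measure_pmf.prob (P n) {\<omega>. e < \<bar>Y n \<omega> - Z n \<omega>\<bar>}) \<longlonglongrightarrow> 0"
  shows "(\<lambda>n. measure_pmf.prob (P n) {\<omega>. Y n \<omega> \<le> x}) \<longlonglongrightarrow> F x"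
proof (rule tendstoI)
  fix r :: real assume r: "r > 0"
  obtain d where d: "d > 0" "\<And>y. dist y x < d \<Longrightarrow> dist (F y) (F x) < r / 3"
    using cont[of x] r unfolding continuous_at_eps_delta by (metis divide_pos_pos zero_less_numeral)
  define e where "e = d / 2"
  have e: "e > 0" "dist (F (x + e)) (F x) < r / 3" "dist (F (x - e)) (F x) < r / 3"
    using d by (auto simp: e_def dist_real_def)
  have ev1: "eventually (\<lambda>n. dist (measure_pmf.prob (P n) {\<omega>. Z n \<omega> \<le> x + e}) (F (x + e)) < r / 3) sequentially"
    using tendstoD[OF Zc, of "r/3"] r by simp
  have ev2: "eventually (\<lambda>n. dist (measure_pmf.prob (P n) {\<omega>. Z n \<omega> \<le> x - e}) (F (x - e)) < r / 3) sequentially"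
    using tendstoD[OF Zc, of "r/3"] r by simp
  have ev3: "eventually (\<lambda>n. dist (measure_pmf.prob (P n) {\<omega>. e < \<bar>Y n \<omega> - Z n \<omega>\<bar>}) 0 < r / 3) sequentially"
    using tendstoD[OF R[OF e(1)], of "r/3"] r by simp
  show "eventually (\<lambda>n. dist (measure_pmf.prob (P n) {\<omega>. Y n \<omega> \<le> x}) (F x) < r) sequentially"
    using ev1 ev2 ev3
  proof eventually_elim
    case (elim n)
    let ?pr = "measure_pmf.prob (P n)"
    have up: "?pr {\<omega>. Y n \<omega> \<le> x} \<le> ?pr {\<omega>. Z n \<omega> \<le> x + e} + ?pr {\<omega>. e < \<bar>Y n \<omega> - Z n \<omega>\<bar>}"
    proof -
      have "?pr {\<omega>. Y n \<omega> \<le> x} \<le> ?pr ({\<omega>. Z n \<omega> \<le> x + e} \<union> {\<omega>. e < \<bar>Y n \<omega> - Z n \<omega>\<bar>})"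
        by (rule measure_pmf.finite_measure_mono) auto
      also have "\<dots> \<le> ?pr {\<omega>. Z n \<omega> \<le> x + e} + ?pr {\<omega>. e < \<bar>Y n \<omega> - Z n \<omega>\<bar>}"
        by (rule measure_Un_le) auto
      finally show ?thesis .
    qed
    have lo: "?pr {\<omega>. Z n \<omega> \<le> x - e} \<le> ?pr {\<omega>. Y n \<omega> \<le> x} + ?pr {\<omega>. e < \<bar>Y n \<omega> - Z n \<omega>\<bar>}"
    proof -
      have "?pr {\<omega>. Z n \<omega> \<le> x - e} \<le> ?pr ({\<omega>. Y n \<omega> \<le> x} \<union> {\<omega>. e < \<bar>Y n \<omega> - Z n \<omega>\<bar>})"
        by (rule measure_pmf.finite_measure_mono) auto
      also have "\<dots> \<le> ?pr {\<omega>. Y n \<omega> \<le> x} + ?pr {\<omega>. e < \<bar>Y n \<omega> - Z n \<omega>\<bar>}"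
        by (rule measure_Un_le) auto
      finally show ?thesis .
    qed
    show ?case using up lo elim e(2,3) unfolding dist_real_def by arith
  qed
qed


lemma Dsum_card: "Dsum n p G = real (card {e\<in>vpairs n. G e}) - real (card (vpairs n)) * p"
proof -
  have "real (card {e\<in>vpairs n. G e}) = (\<Sum>e\<in>vpairs n. if G e then 1 else 0)" by (rule card_filter_real) simp
  thus ?thesis by (simp add: Dsum_def xi_def sum_subtractf of_bool_def)
qed

lemma card_vpairs_lim: "filterlim (\<lambda>n. card (vpairs n)) at_top sequentially"
proof (rule filterlim_at_top_mono[OF filterlim_ident])
  show "\<forall>\<^sub>F n in sequentially. n \<le> card (vpairs n)"
  proof (rule eventually_sequentiallyI[of 3])
    fix n :: nat assume n: "3 \<le> n"
    have h: "0 \<le> real n * (real n - 3)" using n by (intro mult_nonneg_nonneg) auto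
    have "real n \<le> real n * (real n - 1) / 2" using n h by (simp add: field_simps algebra_simps)
    hence "real n \<le> real (card (vpairs n))" by (simp add: card_vpairs_real)
    thus "n \<le> card (vpairs n)" by linarith
  qed
qed

lemma ER_clt:
  assumes p: "0 < p" "p < 1"
  shows "(\<lambda>n. measure_pmf.prob (ER n p) {G. Dsum n p G / sqrt (real (card (vpairs n)) * (p * (1 - p))) \<le> x})
     \<longlonglongrightarrow> cdf std_normal_distribution x"
proof -
  interpret bern_seq p by unfold_locales (use p in auto)
  let ?F = "\<lambda>k. measure_pmf.prob (binomial_pmf k p) {j. (real j - real k * p) / sqrt (real k * (p * (1 - p))) \<le> x}"
  have eq: "measure_pmf.prob (ER n p) {G. Dsum n p G / sqrt (real (card (vpairs n)) * (p * (1 - p))) \<le> x} = ?F (card (vpairs n))" for n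
  proof -
    have "measure_pmf.prob (ER n p) {G. Dsum n p G / sqrt (real (card (vpairs n)) * (p * (1 - p))) \<le> x} =
       measure_pmf.prob (ER n p) ((\<lambda>G. card {e\<in>vpairs n. G e}) -` {j. (real j - real (card (vpairs n)) * p) / sqrt (real (card (vpairs n)) * (p * (1 - p))) \<le> x})"
      by (simp add: Dsum_card)
    also have "\<dots> = measure_pmf.prob (map_pmf (\<lambda>G. card {e\<in>vpairs n. G e}) (ER n p)) {j. (real j - real (card (vpairs n)) * p) / sqrt (real (card (vpairs n)) * (p * (1 - p))) \<le> x}"
      by simp
    also have "map_pmf (\<lambda>G. card {e\<in>vpairs n. G e}) (ER n p) = binomial_pmf (card (vpairs n)) p"
      unfolding ER_def by (rule binomial_pmf_altdef'[symmetric]) (use p in auto)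
    finally show ?thesis .
  qed
  have "(\<lambda>n. ?F (card (vpairs n))) \<longlonglongrightarrow> cdf std_normal_distribution x"
    by (rule filterlim_compose[OF clt_binom card_vpairs_lim])
  thus ?thesis unfolding eq .
qed


lemma markov_ER:
  assumes a: "a > 0" and g: "\<And>G. 0 \<le> g G"
  shows "measure_pmf.prob (ER n p) {G. a \<le> g G} \<le> measure_pmf.expectation (ER n p) g / a"
proof -
  have "a * measure_pmf.prob (ER n p) {G. a \<le> g G} = measure_pmf.expectation (ER n p) (\<lambda>G. a * indicator {G. a \<le> g G} G)"
    by simp
  also have "\<dots> \<le> measure_pmf.expectation (ER n p) g"
    by (intro integral_mono) (auto simp: indicator_def g)
  finally show ?thesis using a by (simp add: field_simps)
qed

definition mm :: "nat \<Rightarrow> real" where "mm n = real (card (triples n))"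
definition NN :: "nat \<Rightarrow> real" where "NN n = real (card (vpairs n))"

lemma sig_alg:
  fixes y m p :: real
  assumes "y > 0" "m > 0" "p > 0"
  shows "(1 / m ^ 2) * ((3 * y * m * p * (1 - p) * (p^4 + p^2 * (1 + p - 2 * p^2) / (3 * y))) / p^6
     + (3 * y * m * p * (1 - p) * (4 * p^2 + p * (1 - p) / y)) / (9 * p^4)
     - 2 * (3 * y * m * p * (1 - p) * (2 * p^3 + p^2 * (1 - p) / y)) / (3 * p^5))
   = (p * (1 - p) / m) * (y / (3 * p\<^sup>2) + (1 - p) * (3 + p) / (3 * p ^ 4))"
  using assms
  apply (simp add: field_simps)
  apply algebra
  done

lemma sigma_sq_eq:
  assumes n: "n \<ge> 3" and p: "0 < p"
  shows "sigma_sq n p = (p * (1 - p) / mm n) * ((real n - 2) / (3 * p\<^sup>2) + (1 - p) * (3 + p) / (3 * p ^ 4))"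
proof -
  have m: "mm n = real (n choose 3)" by (simp add: mm_def card_triples_real choose3_real)
  have n2: "real n - 2 > 0" using n by simp
  have mpos: "real (n choose 3) > 0" using n by simp
  show ?thesis
    unfolding sigma_sq_def Sig11_def Sig12_def Sig22_def Sig_pref_def m
    by (rule sig_alg[OF n2 mpos p])
qed


definition sig :: "nat \<Rightarrow> real \<Rightarrow> real" where "sig n p = sqrt (sigma_sq n p)"
definition uu where "uu n p G = (real n - 2) * Dsum n p G / (mm n * p) + Usum n p G / (mm n * p ^ 3)"
definition vv where "vv n p G = 2 * (real n - 2) * Dsum n p G / (3 * mm n * p) + Wsum n p G / (3 * mm n * p\<^sup>2)"
definition RR where "RR n p G = Usum n p G / (mm n * p ^ 3) - Wsum n p G / (3 * mm n * p\<^sup>2)"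
definition cc where "cc n p = (real n - 2) / (3 * mm n * p * sig n p) - 1 / sqrt (NN n * (p * (1 - p)))"
definition Yf where "Yf n p G = (ln (clustering n G) - ln p) / sig n p"
definition Zf where "Zf n p G = Dsum n p G / sqrt (NN n * (p * (1 - p)))"

lemma mm_pos: "n \<ge> 3 \<Longrightarrow> mm n > 0"
  by (simp add: mm_def card_triples_real)

lemma sigma_sq_pos: "n \<ge> 3 \<Longrightarrow> 0 < p \<Longrightarrow> p < 1 \<Longrightarrow> sigma_sq n p > 0"
proof -
  assume n: "n \<ge> 3" and p: "0 < p" "p < 1"
  have a: "(real n - 2) / (3 * p\<^sup>2) > 0" using n p by simp
  have b: "(1 - p) * (3 + p) / (3 * p ^ 4) \<ge> 0" using p by simp
  have "(p * (1 - p) / mm n) * ((real n - 2) / (3 * p\<^sup>2) + (1 - p) * (3 + p) / (3 * p ^ 4)) > 0"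
    using mm_pos[OF n] p add_pos_nonneg[OF a b] by (intro mult_pos_pos divide_pos_pos) auto
  thus ?thesis using n p by (simp add: sigma_sq_eq)
qed

lemma sig_pos: "n \<ge> 3 \<Longrightarrow> 0 < p \<Longrightarrow> p < 1 \<Longrightarrow> sig n p > 0"
  using sigma_sq_pos by (simp add: sig_def)

lemma key_identity:
  assumes n: "n \<ge> 3" and p: "0 < p" "p < 1" and u: "\<bar>uu n p G\<bar> \<le> 1/2" and v: "\<bar>vv n p G\<bar> \<le> 1/2"
  shows "Yf n p G - Zf n p G = ((ln (1 + uu n p G) - uu n p G) - (ln (1 + vv n p G) - vv n p G)) / sig n p
           + cc n p * Dsum n p G + RR n p G / sig n p"
proof -
  define u where "u = uu n p G"
  define v where "v = vv n p G"
  define m where "m = mm n"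
  define D where "D = Dsum n p G"
  have m: "m > 0" using mm_pos[OF n] by (simp add: m_def)
  have s: "sig n p > 0" using sig_pos[OF n p] .
  have T0: "Tsum n G = m * p ^ 3 + p\<^sup>2 * (real n - 2) * D + Usum n p G"
    using T_decomp[of n G p] by (simp add: m_def mm_def D_def)
  have S0: "Ssum n G = m * (3 * p\<^sup>2) + 2 * p * (real n - 2) * D + Wsum n p G"
    using S_decomp[of n G p] by (simp add: m_def mm_def D_def)
  have T1: "m * p ^ 3 * u = p\<^sup>2 * (real n - 2) * D + Usum n p G"
    unfolding u_def uu_def D_def m_def[symmetric] using m p by (simp add: field_simps power2_eq_square power3_eq_cube)
  have S1: "3 * m * p\<^sup>2 * v = 2 * p * (real n - 2) * D + Wsum n p G"
    unfolding v_def vv_def D_def m_def[symmetric] using m p by (simp add: field_simps power2_eq_square)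
  have T: "Tsum n G = m * p ^ 3 * (1 + u)" using T0 T1 by (simp add: algebra_simps)
  have S: "Ssum n G = 3 * m * p\<^sup>2 * (1 + v)" using S0 S1 by (simp add: algebra_simps)
  have u1: "1 + u > 0" "1 + v > 0" using u v by (auto simp: u_def v_def)
  have c0: "3 * m * p\<^sup>2 \<noteq> 0" using m p by simp
  have "3 * (m * p ^ 3 * (1 + u)) / (3 * m * p\<^sup>2 * (1 + v)) = ((3 * m * p\<^sup>2) * (p * (1 + u))) / ((3 * m * p\<^sup>2) * (1 + v))"
    by (simp add: power2_eq_square power3_eq_cube algebra_simps)
  also have "\<dots> = p * (1 + u) / (1 + v)" using c0 by (rule mult_divide_mult_cancel_left)
  finally have C: "clustering n G = p * (1 + u) / (1 + v)"
    unfolding clustering_def triangles_eq conn_eq T S .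
  have lnC: "ln (clustering n G) - ln p = ln (1 + u) - ln (1 + v)"
    unfolding C using p u1 by (simp add: ln_div ln_mult)
  have uv: "u - v = (real n - 2) * D / (3 * m * p) + RR n p G"
    unfolding u_def v_def uu_def vv_def RR_def D_def m_def using m p by (simp add: field_simps m_def)
  have "Yf n p G - Zf n p G = (ln (1 + u) - ln (1 + v)) / sig n p - D / sqrt (NN n * (p * (1 - p)))"
    unfolding Yf_def Zf_def lnC D_def ..
  also have "\<dots> = ((ln (1 + u) - u) - (ln (1 + v) - v)) / sig n p + (u - v) / sig n p - D / sqrt (NN n * (p * (1 - p)))"
    by (simp add: diff_divide_distrib add_divide_distrib)
  also have "\<dots> = ((ln (1 + u) - u) - (ln (1 + v) - v)) / sig n p + cc n p * D + RR n p G / sig n p"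
    unfolding uv cc_def m_def using s m p by (simp add: field_simps m_def)
  finally show ?thesis by (simp add: u_def v_def D_def)
qed


lemma Esq2:
  fixes a b :: real
  shows "measure_pmf.expectation (ER n p) (\<lambda>G. (a * f G + b * g G)\<^sup>2) \<le>
     2 * a\<^sup>2 * measure_pmf.expectation (ER n p) (\<lambda>G. (f G)\<^sup>2) + 2 * b\<^sup>2 * measure_pmf.expectation (ER n p) (\<lambda>G. (g G)\<^sup>2)"
proof -
  have "measure_pmf.expectation (ER n p) (\<lambda>G. (a * f G + b * g G)\<^sup>2) \<le>
        measure_pmf.expectation (ER n p) (\<lambda>G. 2 * a\<^sup>2 * (f G)\<^sup>2 + 2 * b\<^sup>2 * (g G)\<^sup>2)"
  proof (rule integral_mono)
    fix G
    have "0 \<le> (a * f G - b * g G)\<^sup>2" by simp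
    thus "(a * f G + b * g G)\<^sup>2 \<le> 2 * a\<^sup>2 * (f G)\<^sup>2 + 2 * b\<^sup>2 * (g G)\<^sup>2"
      by (simp add: power2_eq_square algebra_simps)
  qed simp_all
  also have "\<dots> = 2 * a\<^sup>2 * measure_pmf.expectation (ER n p) (\<lambda>G. (f G)\<^sup>2) + 2 * b\<^sup>2 * measure_pmf.expectation (ER n p) (\<lambda>G. (g G)\<^sup>2)"
    by simp
  finally show ?thesis .
qed

lemma prob_sq:
  assumes a: "a > 0"
  shows "measure_pmf.prob (ER n p) {G. a \<le> \<bar>f G\<bar>} \<le> measure_pmf.expectation (ER n p) (\<lambda>G. (f G)\<^sup>2) / a\<^sup>2"
proof -
  have "{G. a \<le> \<bar>f G\<bar>} = {G. a\<^sup>2 \<le> (f G)\<^sup>2}"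
    using a by (auto simp: abs_le_square_iff[symmetric] abs_of_pos)
  thus ?thesis using markov_ER[of "a\<^sup>2" "\<lambda>G. (f G)\<^sup>2" n p] a by simp
qed

lemma event_incl:
  assumes n: "n \<ge> 3" and p: "0 < p" "p < 1" and e: "e > 0"
  shows "{G. e < \<bar>Yf n p G - Zf n p G\<bar>} \<subseteq>
    {G. 1/2 < \<bar>uu n p G\<bar>} \<union> {G. 1/2 < \<bar>vv n p G\<bar>} \<union>
    {G. e * sig n p / 8 \<le> (uu n p G)\<^sup>2} \<union> {G. e * sig n p / 8 \<le> (vv n p G)\<^sup>2} \<union>
    {G. e / 4 \<le> \<bar>cc n p * Dsum n p G\<bar>} \<union> {G. e * sig n p / 4 \<le> \<bar>RR n p G\<bar>}"
proof (rule subsetI, rule ccontr)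
  fix G assume G: "G \<in> {G. e < \<bar>Yf n p G - Zf n p G\<bar>}" and nG: "G \<notin> {G. 1/2 < \<bar>uu n p G\<bar>} \<union> {G. 1/2 < \<bar>vv n p G\<bar>} \<union>
    {G. e * sig n p / 8 \<le> (uu n p G)\<^sup>2} \<union> {G. e * sig n p / 8 \<le> (vv n p G)\<^sup>2} \<union>
    {G. e / 4 \<le> \<bar>cc n p * Dsum n p G\<bar>} \<union> {G. e * sig n p / 4 \<le> \<bar>RR n p G\<bar>}"
  define u where "u = uu n p G"
  define v where "v = vv n p G"
  define s where "s = sig n p"
  have s: "s > 0" using sig_pos[OF n p] by (simp add: s_def)
  from nG have h: "\<bar>u\<bar> \<le> 1/2" "\<bar>v\<bar> \<le> 1/2" "u\<^sup>2 < e * s / 8" "v\<^sup>2 < e * s / 8"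
    "\<bar>cc n p * Dsum n p G\<bar> < e / 4" "\<bar>RR n p G\<bar> < e * s / 4"
    by (auto simp: u_def v_def s_def)
  have lu: "\<bar>ln (1 + u) - u\<bar> < e * s / 4" using abs_ln_one_plus_x_minus_x_bound[OF h(1)] h(3) by simp
  have lv: "\<bar>ln (1 + v) - v\<bar> < e * s / 4" using abs_ln_one_plus_x_minus_x_bound[OF h(2)] h(4) by simp
  have eq: "Yf n p G - Zf n p G = ((ln (1 + u) - u) - (ln (1 + v) - v)) / s + cc n p * Dsum n p G + RR n p G / s"
    using key_identity[OF n p h(1,2)[unfolded u_def v_def]] by (simp add: u_def v_def s_def)
  have "\<bar>((ln (1 + u) - u) - (ln (1 + v) - v)) / s\<bar> < e / 2"
  proof -
    have "\<bar>(ln (1 + u) - u) - (ln (1 + v) - v)\<bar> < e * s / 2" using lu lv by linarith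
    thus ?thesis using s by (simp add: abs_divide pos_divide_less_eq)
  qed
  moreover have "\<bar>RR n p G / s\<bar> < e / 4" using h(6) s by (simp add: abs_divide pos_divide_less_eq)
  ultimately have "\<bar>Yf n p G - Zf n p G\<bar> < e" unfolding eq using h(5) by linarith
  thus False using G by simp
qed


lemma union6:
  "measure_pmf.prob P (A \<union> B \<union> C \<union> D \<union> E \<union> F) \<le>
   measure_pmf.prob P A + measure_pmf.prob P B + measure_pmf.prob P C + measure_pmf.prob P D + measure_pmf.prob P E + measure_pmf.prob P F"
proof -
  have u: "measure_pmf.prob P (X \<union> Y) \<le> measure_pmf.prob P X + measure_pmf.prob P Y" for X Y
    by (rule measure_Un_le) auto
  have "measure_pmf.prob P (A \<union> B \<union> C \<union> D \<union> E \<union> F) \<le> measure_pmf.prob P (A \<union> B \<union> C \<union> D \<union> E) + measure_pmf.prob P F" by (rule u)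
  also have "measure_pmf.prob P (A \<union> B \<union> C \<union> D \<union> E) \<le> measure_pmf.prob P (A \<union> B \<union> C \<union> D) + measure_pmf.prob P E" by (rule u)
  also have "measure_pmf.prob P (A \<union> B \<union> C \<union> D) \<le> measure_pmf.prob P (A \<union> B \<union> C) + measure_pmf.prob P D" by (rule u)
  also have "measure_pmf.prob P (A \<union> B \<union> C) \<le> measure_pmf.prob P (A \<union> B) + measure_pmf.prob P C" by (rule u)
  also have "measure_pmf.prob P (A \<union> B) \<le> measure_pmf.prob P A + measure_pmf.prob P B" by (rule u)
  finally show ?thesis by simp
qed

abbreviation EE :: "nat \<Rightarrow> real \<Rightarrow> ((nat \<times> nat \<Rightarrow> bool) \<Rightarrow> real) \<Rightarrow> real" where
  "EE n p f \<equiv> measure_pmf.expectation (ER n p) (\<lambda>G. (f G)\<^sup>2)"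

lemma prob_bound:
  assumes n: "n \<ge> 3" and p: "0 < p" "p < 1" and e: "e > 0"
  shows "measure_pmf.prob (ER n p) {G. e < \<bar>Yf n p G - Zf n p G\<bar>} \<le>
     4 * EE n p (uu n p) + 4 * EE n p (vv n p) + EE n p (uu n p) / (e * sig n p / 8) + EE n p (vv n p) / (e * sig n p / 8)
     + EE n p (\<lambda>G. cc n p * Dsum n p G) / (e / 4)\<^sup>2 + EE n p (RR n p) / (e * sig n p / 4)\<^sup>2"
proof -
  have s: "sig n p > 0" using sig_pos[OF n p] .
  have es: "e * sig n p / 8 > 0" "e * sig n p / 4 > 0" using e s by auto
  let ?P = "measure_pmf.prob (ER n p)"
  have "?P {G. e < \<bar>Yf n p G - Zf n p G\<bar>} \<le> ?P ({G. 1/2 < \<bar>uu n p G\<bar>} \<union> {G. 1/2 < \<bar>vv n p G\<bar>} \<union>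
    {G. e * sig n p / 8 \<le> (uu n p G)\<^sup>2} \<union> {G. e * sig n p / 8 \<le> (vv n p G)\<^sup>2} \<union>
    {G. e / 4 \<le> \<bar>cc n p * Dsum n p G\<bar>} \<union> {G. e * sig n p / 4 \<le> \<bar>RR n p G\<bar>})"
    by (rule measure_pmf.finite_measure_mono[OF event_incl[OF n p e]]) simp
  also have "\<dots> \<le> ?P {G. 1/2 < \<bar>uu n p G\<bar>} + ?P {G. 1/2 < \<bar>vv n p G\<bar>} +
    ?P {G. e * sig n p / 8 \<le> (uu n p G)\<^sup>2} + ?P {G. e * sig n p / 8 \<le> (vv n p G)\<^sup>2} +
    ?P {G. e / 4 \<le> \<bar>cc n p * Dsum n p G\<bar>} + ?P {G. e * sig n p / 4 \<le> \<bar>RR n p G\<bar>}"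
    by (rule union6)
  also have "\<dots> \<le> 4 * EE n p (uu n p) + 4 * EE n p (vv n p) + EE n p (uu n p) / (e * sig n p / 8) + EE n p (vv n p) / (e * sig n p / 8)
     + EE n p (\<lambda>G. cc n p * Dsum n p G) / (e / 4)\<^sup>2 + EE n p (RR n p) / (e * sig n p / 4)\<^sup>2"
  proof (intro add_mono)
    have "?P {G. 1/2 < \<bar>uu n p G\<bar>} \<le> ?P {G. 1/2 \<le> \<bar>uu n p G\<bar>}"
      by (rule measure_pmf.finite_measure_mono) auto
    also have "\<dots> \<le> EE n p (uu n p) / (1/2)\<^sup>2" by (rule prob_sq) simp
    finally show "?P {G. 1/2 < \<bar>uu n p G\<bar>} \<le> 4 * EE n p (uu n p)" by (simp add: power2_eq_square)
    have "?P {G. 1/2 < \<bar>vv n p G\<bar>} \<le> ?P {G. 1/2 \<le> \<bar>vv n p G\<bar>}"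
      by (rule measure_pmf.finite_measure_mono) auto
    also have "\<dots> \<le> EE n p (vv n p) / (1/2)\<^sup>2" by (rule prob_sq) simp
    finally show "?P {G. 1/2 < \<bar>vv n p G\<bar>} \<le> 4 * EE n p (vv n p)" by (simp add: power2_eq_square)
    show "?P {G. e * sig n p / 8 \<le> (uu n p G)\<^sup>2} \<le> EE n p (uu n p) / (e * sig n p / 8)"
      by (rule markov_ER[OF es(1)]) simp
    show "?P {G. e * sig n p / 8 \<le> (vv n p G)\<^sup>2} \<le> EE n p (vv n p) / (e * sig n p / 8)"
      by (rule markov_ER[OF es(1)]) simp
    show "?P {G. e / 4 \<le> \<bar>cc n p * Dsum n p G\<bar>} \<le> EE n p (\<lambda>G. cc n p * Dsum n p G) / (e / 4)\<^sup>2"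
      by (rule prob_sq) (use e in simp)
    show "?P {G. e * sig n p / 4 \<le> \<bar>RR n p G\<bar>} \<le> EE n p (RR n p) / (e * sig n p / 4)\<^sup>2"
      by (rule prob_sq[OF es(2)])
  qed
  finally show ?thesis .
qed



lemma Eu_alg:
  fixes y p m N q a :: real
  assumes y: "y \<ge> 1" and p: "0 < p" "p < 1" and a: "a \<ge> y\<^sup>2" and m: "m = a * y / 6" and N: "N = a / 2"
    and q: "q = p * (1 - p)"
  shows "2 * (y / (m * p))\<^sup>2 * (N * q) + 2 * (1 / (m * p ^ 3))\<^sup>2 * (4 * m) \<le> (36 * q / p\<^sup>2 + 48 / p ^ 6) / y\<^sup>2"
proof -
  have yp: "y > 0" using y by simp
  have ap: "a > 0" using a yp by (smt (verit) zero_less_power)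
  have t1: "2 * (y / (m * p))\<^sup>2 * (N * q) = 36 * q / (p\<^sup>2 * a)"
    unfolding m N using yp p ap by (simp add: field_simps power2_eq_square)
  have t2: "2 * (1 / (m * p ^ 3))\<^sup>2 * (4 * m) = 48 / (p ^ 6 * (a * y))"
    unfolding m using yp p ap by (simp add: field_simps power2_eq_square)
  have q0: "q \<ge> 0" using p q by simp
  have b1: "36 * q / (p\<^sup>2 * a) \<le> 36 * q / (p\<^sup>2 * y\<^sup>2)"
    by (rule divide_left_mono) (use q0 yp p a ap in \<open>auto intro!: mult_left_mono\<close>)
  have y2: "y * 1 \<le> y * y" by (rule mult_left_mono) (use y in auto)
  hence ya: "y \<le> a" using a by (simp add: power2_eq_square)
  have "y * y \<le> a * y" by (rule mult_right_mono) (use ya yp in auto)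
  hence ay: "a * y \<ge> y\<^sup>2" by (simp add: power2_eq_square)
  have b2: "48 / (p ^ 6 * (a * y)) \<le> 48 / (p ^ 6 * y\<^sup>2)"
    by (rule divide_left_mono) (use yp p ay ap in \<open>auto intro!: mult_left_mono\<close>)
  have "36 * q / (p\<^sup>2 * y\<^sup>2) + 48 / (p ^ 6 * y\<^sup>2) = (36 * q / p\<^sup>2 + 48 / p ^ 6) / y\<^sup>2"
    using yp p by (simp add: field_simps)
  thus ?thesis using t1 t2 b1 b2 by linarith
qed



lemma Ev_alg:
  fixes y p m N q a :: real
  assumes y: "y \<ge> 1" and p: "0 < p" "p < 1" and a: "a \<ge> y\<^sup>2" and m: "m = a * y / 6" and N: "N = a / 2"
    and q: "q = p * (1 - p)"
  shows "2 * (2 * y / (3 * m * p))\<^sup>2 * (N * q) + 2 * (1 / (3 * m * p\<^sup>2))\<^sup>2 * (4 * m) \<le> (36 * q / p\<^sup>2 + 48 / p ^ 6) / y\<^sup>2"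
proof -
  have yp: "y > 0" using y by simp
  have ap: "a > 0" using a yp by (smt (verit) zero_less_power)
  have mp: "m > 0" unfolding m using ap yp by simp
  have q0: "q \<ge> 0" using p q by simp
  have e1: "(2 * y / (3 * m * p))\<^sup>2 = 4/9 * (y / (m * p))\<^sup>2" by (simp add: power2_eq_square)
  have e2: "(1 / (3 * m * p\<^sup>2))\<^sup>2 = p\<^sup>2 / 9 * (1 / (m * p ^ 3))\<^sup>2" using p by (simp add: power2_eq_square power3_eq_cube field_simps)
  have "2 * (2 * y / (3 * m * p))\<^sup>2 * (N * q) \<le> 2 * (y / (m * p))\<^sup>2 * (N * q)"
    unfolding e1 using q0 ap N by (intro mult_right_mono) auto
  moreover have "2 * (1 / (3 * m * p\<^sup>2))\<^sup>2 * (4 * m) \<le> 2 * (1 / (m * p ^ 3))\<^sup>2 * (4 * m)"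
  proof -
    have "p\<^sup>2 \<le> 1" using p by (simp add: power_le_one)
    hence "p\<^sup>2 / 9 \<le> 1" by simp
    hence "p\<^sup>2 / 9 * (1 / (m * p ^ 3))\<^sup>2 \<le> (1 / (m * p ^ 3))\<^sup>2" by (intro mult_left_le_one_le) auto
    thus ?thesis unfolding e2 using mp by (intro mult_right_mono mult_left_mono) auto
  qed
  ultimately show ?thesis using Eu_alg[OF assms] by linarith
qed

lemma ER_alg:
  fixes y p m q a e s2 b :: real
  assumes y: "y \<ge> 1" and p: "0 < p" "p < 1" and a: "a \<ge> y\<^sup>2" and m: "m = a * y / 6"
    and q: "q = p * (1 - p)" and e: "e > 0" and b: "b \<ge> 0" and s2: "s2 = (q / m) * (y / (3 * p\<^sup>2) + b)"
    and ER: "R \<le> 2 * (1 / (m * p ^ 3))\<^sup>2 * (4 * m) + 2 * (1 / (3 * m * p\<^sup>2))\<^sup>2 * (4 * m)"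
  shows "R / (e * sqrt s2 / 4)\<^sup>2 \<le> (768 / (q * e\<^sup>2 * p ^ 4)) / y"
proof -
  have yp: "y > 0" using y by simp
  have ap: "a > 0" using a yp by (smt (verit) zero_less_power)
  have mp: "m > 0" unfolding m using ap yp by simp
  have qp: "q > 0" using p q by simp
  have s2l: "s2 \<ge> 2 * q / (p\<^sup>2 * a)"
  proof -
    have "q / m * (y / (3 * p\<^sup>2)) = 2 * q / (p\<^sup>2 * a)" unfolding m using yp ap p by (simp add: field_simps power2_eq_square)
    moreover have "q / m * (y / (3 * p\<^sup>2)) \<le> q / m * (y / (3 * p\<^sup>2) + b)" using qp mp b by (intro mult_left_mono) auto
    ultimately show ?thesis unfolding s2 by simp
  qed
  have s2p: "s2 > 0" using s2l qp p ap by (smt (verit) divide_pos_pos mult_pos_pos zero_less_power)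
  have den: "(e * sqrt s2 / 4)\<^sup>2 = e\<^sup>2 * s2 / 16" using s2p by (simp add: power2_eq_square field_simps)
  have R1: "R \<le> 16 / (m * p ^ 6)"
  proof -
    have "2 * (1 / (3 * m * p\<^sup>2))\<^sup>2 * (4 * m) \<le> 2 * (1 / (m * p ^ 3))\<^sup>2 * (4 * m)"
    proof -
      have e2: "(1 / (3 * m * p\<^sup>2))\<^sup>2 = p\<^sup>2 / 9 * (1 / (m * p ^ 3))\<^sup>2" using p by (simp add: power2_eq_square power3_eq_cube field_simps)
      have "p\<^sup>2 \<le> 1" using p by (simp add: power_le_one)
    hence "p\<^sup>2 / 9 \<le> 1" by simp
      hence "p\<^sup>2 / 9 * (1 / (m * p ^ 3))\<^sup>2 \<le> (1 / (m * p ^ 3))\<^sup>2" by (intro mult_left_le_one_le) auto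
      thus ?thesis unfolding e2 using mp by (intro mult_right_mono mult_left_mono) auto
    qed
    moreover have "2 * (1 / (m * p ^ 3))\<^sup>2 * (4 * m) = 8 / (m * p ^ 6)" using mp p by (simp add: field_simps power2_eq_square)
    ultimately show ?thesis using ER by simp
  qed
  have "R / (e * sqrt s2 / 4)\<^sup>2 = 16 * R / (e\<^sup>2 * s2)" unfolding den using e s2p by (simp add: field_simps)
  also have "\<dots> \<le> 16 * (16 / (m * p ^ 6)) / (e\<^sup>2 * (2 * q / (p\<^sup>2 * a)))"
  proof (rule frac_le)
    show "0 \<le> 16 * (16 / (m * p ^ 6))" using mp p by simp
    show "16 * R \<le> 16 * (16 / (m * p ^ 6))" using R1 by simp
    show "0 < e\<^sup>2 * (2 * q / (p\<^sup>2 * a))" using e qp p ap by simp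
    show "e\<^sup>2 * (2 * q / (p\<^sup>2 * a)) \<le> e\<^sup>2 * s2" using s2l e by (intro mult_left_mono) auto
  qed
  also have "\<dots> = (768 / (q * e\<^sup>2 * p ^ 4)) / y"
  proof -
    have p6: "p ^ 6 = p\<^sup>2 * p ^ 4" by (simp flip: power_add)
    show ?thesis unfolding m p6 using yp ap p qp e by (simp add: field_simps power2_eq_square)
  qed
  finally show ?thesis .
qed



lemma Eu_sig_alg:
  fixes y p q a e s2 R K :: real
  assumes y: "y \<ge> 1" and p: "0 < p" and qp: "q > 0" and a: "a \<le> 6 * y\<^sup>2" and ap: "a > 0" and e: "e > 0"
    and s2l: "s2 \<ge> 2 * q / (p\<^sup>2 * a)" and R: "R \<le> K / y\<^sup>2" and R0: "R \<ge> 0"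
  shows "R / (e * sqrt s2 / 8) \<le> (8 * K * p / (e * sqrt (q / 3))) / y"
proof -
  have yp: "y > 0" using y by simp
  have c: "2 * q / (p\<^sup>2 * a) \<ge> (sqrt (q / 3) / (p * y))\<^sup>2"
  proof -
    have "(sqrt (q / 3) / (p * y))\<^sup>2 = 2 * q / (p\<^sup>2 * (6 * y\<^sup>2))" using qp p yp by (simp add: power2_eq_square field_simps)
    also have "\<dots> \<le> 2 * q / (p\<^sup>2 * a)" by (rule divide_left_mono) (use qp p ap a yp in \<open>auto intro!: mult_left_mono\<close>)
    finally show ?thesis .
  qed
  have cp: "sqrt (q / 3) / (p * y) > 0" using qp p yp by simp
  have sl: "sqrt s2 \<ge> sqrt (q / 3) / (p * y)"
  proof -
    have "(sqrt (q / 3) / (p * y))\<^sup>2 \<le> s2" using c s2l by linarith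
    hence "sqrt ((sqrt (q / 3) / (p * y))\<^sup>2) \<le> sqrt s2" by (rule real_sqrt_le_mono)
    moreover have "sqrt ((sqrt (q / 3) / (p * y))\<^sup>2) = sqrt (q / 3) / (p * y)"
      by (rule real_sqrt_unique) (use cp in auto)
    ultimately show ?thesis by simp
  qed
  have "R / (e * sqrt s2 / 8) = 8 * R / (e * sqrt s2)" by simp
  also have "\<dots> \<le> 8 * (K / y\<^sup>2) / (e * (sqrt (q / 3) / (p * y)))"
  proof (rule frac_le)
    show "0 \<le> 8 * (K / y\<^sup>2)" using R R0 by linarith
    show "8 * R \<le> 8 * (K / y\<^sup>2)" using R by simp
    show "0 < e * (sqrt (q / 3) / (p * y))" using e cp by (intro mult_pos_pos)
    show "e * (sqrt (q / 3) / (p * y)) \<le> e * sqrt s2" using sl e by (intro mult_left_mono) auto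
  qed
  also have "\<dots> = (8 * K * p / (e * sqrt (q / 3))) / y"
    using yp p e qp by (simp add: field_simps power2_eq_square)
  finally show ?thesis .
qed

lemma cc_alg:
  fixes y p q a m N s2 b :: real
  assumes y: "y \<ge> 1" and p: "0 < p" and qp: "q > 0" and ap: "a > 0" and m: "m = a * y / 6" and N: "N = a / 2"
    and b: "b \<ge> 0" and s2: "s2 = (q / m) * (y / (3 * p\<^sup>2) + b)"
  shows "(y / (3 * m * p * sqrt s2) - 1 / sqrt (N * q))\<^sup>2 * (N * q) \<le> (9 * p\<^sup>2 * b) / (3 * y)"
proof -
  have yp: "y > 0" using y by simp
  have mp: "m > 0" unfolding m using ap yp by simp
  have Np: "N > 0" unfolding N using ap by simp
  have s2p: "s2 > 0" unfolding s2 using qp mp yp p b by (intro mult_pos_pos divide_pos_pos add_pos_nonneg) auto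
  define g where "g = 9 * p\<^sup>2 * b"
  have g0: "g \<ge> 0" using b by (simp add: g_def)
  define r where "r = y * sqrt (N * q) / (3 * m * p * sqrt s2)"
  have r0: "r > 0" unfolding r_def using yp Np qp mp p s2p by simp
  have lhs: "(y / (3 * m * p * sqrt s2) - 1 / sqrt (N * q))\<^sup>2 * (N * q) = (r - 1)\<^sup>2"
  proof -
    have sN: "sqrt (N * q) > 0" using Np qp by simp
    have "(y / (3 * m * p * sqrt s2) - 1 / sqrt (N * q)) * sqrt (N * q) =
          y / (3 * m * p * sqrt s2) * sqrt (N * q) - 1"
      using sN Np qp by (simp only: left_diff_distrib) simp
    also have "y / (3 * m * p * sqrt s2) * sqrt (N * q) = r" unfolding r_def by simp
    finally have "(y / (3 * m * p * sqrt s2) - 1 / sqrt (N * q)) * sqrt (N * q) = r - 1" .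
    moreover have "(N * q) = (sqrt (N * q))\<^sup>2" using Np qp by simp
    ultimately show ?thesis by (metis power_mult_distrib)
  qed
  have r2: "r\<^sup>2 = 3 * y / (3 * y + g)"
  proof -
    have "r\<^sup>2 = y\<^sup>2 * (N * q) / (9 * m\<^sup>2 * p\<^sup>2 * s2)"
      unfolding r_def using Np qp s2p by (simp add: power2_eq_square field_simps)
    also have "\<dots> = (3 * y) * (m * q) / ((3 * y + g) * (m * q))"
    proof -
      have den: "9 * m\<^sup>2 * p\<^sup>2 * s2 = (3 * y + g) * (m * q)"
        unfolding s2 g_def using mp p by (simp add: field_simps power2_eq_square)
      have num: "y\<^sup>2 * (N * q) = (3 * y) * (m * q)" unfolding m N by (simp add: power2_eq_square)
      show ?thesis unfolding den num ..
    qed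
    also have "\<dots> = 3 * y / (3 * y + g)" using mp qp by simp
    finally show ?thesis .
  qed
  have "r\<^sup>2 \<le> 1" unfolding r2 using yp g0 by simp
  hence r1: "r \<le> 1" using r0 by (metis abs_of_pos abs_le_square_iff power_one abs_one)
  have "(r - 1)\<^sup>2 \<le> 1 - r\<^sup>2"
  proof -
    have "(r - 1)\<^sup>2 = (1 - r) * (1 - r)" by (simp add: power2_eq_square algebra_simps)
    also have "\<dots> \<le> (1 - r) * (1 + r)" using r1 r0 by (intro mult_left_mono) auto
    also have "\<dots> = 1 - r\<^sup>2" by (simp add: power2_eq_square algebra_simps)
    finally show ?thesis .
  qed
  also have "1 - r\<^sup>2 = g / (3 * y + g)" unfolding r2 using yp g0 by (simp add: field_simps)
  also have "\<dots> \<le> g / (3 * y)" by (rule divide_left_mono) (use yp g0 in auto)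
  finally show ?thesis unfolding lhs g_def .
qed


lemma EE_bounds:
  assumes n: "n \<ge> 3" and p: "0 < p" "p < 1"
  defines "y \<equiv> real n - 2" and "a \<equiv> real n * (real n - 1)"
  shows "mm n = a * y / 6" "NN n = a / 2" "a \<ge> y\<^sup>2" "a \<le> 6 * y\<^sup>2" "y \<ge> 1"
    "EE n p (uu n p) \<le> 2 * (y / (mm n * p))\<^sup>2 * (NN n * (p * (1 - p))) + 2 * (1 / (mm n * p ^ 3))\<^sup>2 * (4 * mm n)"
    "EE n p (vv n p) \<le> 2 * (2 * y / (3 * mm n * p))\<^sup>2 * (NN n * (p * (1 - p))) + 2 * (1 / (3 * mm n * p\<^sup>2))\<^sup>2 * (4 * mm n)"
    "EE n p (RR n p) \<le> 2 * (1 / (mm n * p ^ 3))\<^sup>2 * (4 * mm n) + 2 * (1 / (3 * mm n * p\<^sup>2))\<^sup>2 * (4 * mm n)"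
    "EE n p (\<lambda>G. cc n p * Dsum n p G) = (cc n p)\<^sup>2 * (NN n * (p * (1 - p)))"
proof -
  have p01: "0 \<le> p" "p \<le> 1" using p by auto
  show m: "mm n = a * y / 6" unfolding mm_def card_triples_real a_def y_def by simp
  show "NN n = a / 2" unfolding NN_def card_vpairs_real a_def by simp
  show y1: "y \<ge> 1" using n unfolding y_def by simp
  show "a \<ge> y\<^sup>2" unfolding a_def y_def using n by (simp add: power2_eq_square algebra_simps)
  show "a \<le> 6 * y\<^sup>2"
  proof -
    have "a = (y + 2) * (y + 1)" unfolding a_def y_def by (simp add: algebra_simps)
    moreover have "(y + 2) * (y + 1) \<le> (3 * y) * (2 * y)" using y1 by (intro mult_mono) auto
    ultimately show ?thesis by (simp add: power2_eq_square)
  qed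
  have mp: "mm n > 0" using mm_pos[OF n] .
  have ED: "EE n p (Dsum n p) = NN n * (p * (1 - p))" using ED2[OF p01, of n] by (simp add: NN_def)
  have EU: "EE n p (Usum n p) \<le> 4 * mm n" using EU2[OF p01, of n] by (simp add: mm_def)
  have EW: "EE n p (Wsum n p) \<le> 4 * mm n" using EW2[OF p01, of n] by (simp add: mm_def)
  have c1: "0 \<le> 2 * (1 / (mm n * p ^ 3))\<^sup>2" "0 \<le> 2 * (1 / (3 * mm n * p\<^sup>2))\<^sup>2" by simp_all
  have "uu n p G = (y / (mm n * p)) * Dsum n p G + (1 / (mm n * p ^ 3)) * Usum n p G" for G
    unfolding uu_def y_def by simp
  hence "EE n p (uu n p) = measure_pmf.expectation (ER n p) (\<lambda>G. ((y / (mm n * p)) * Dsum n p G + (1 / (mm n * p ^ 3)) * Usum n p G)\<^sup>2)"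
    by simp
  also have "\<dots> \<le> 2 * (y / (mm n * p))\<^sup>2 * EE n p (Dsum n p) + 2 * (1 / (mm n * p ^ 3))\<^sup>2 * EE n p (Usum n p)"
    by (rule Esq2)
  also have "\<dots> \<le> 2 * (y / (mm n * p))\<^sup>2 * (NN n * (p * (1 - p))) + 2 * (1 / (mm n * p ^ 3))\<^sup>2 * (4 * mm n)"
    unfolding ED using EU c1 by (intro add_left_mono mult_left_mono) auto
  finally show "EE n p (uu n p) \<le> 2 * (y / (mm n * p))\<^sup>2 * (NN n * (p * (1 - p))) + 2 * (1 / (mm n * p ^ 3))\<^sup>2 * (4 * mm n)" .
  have "vv n p G = (2 * y / (3 * mm n * p)) * Dsum n p G + (1 / (3 * mm n * p\<^sup>2)) * Wsum n p G" for G
    unfolding vv_def y_def by simp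
  hence "EE n p (vv n p) = measure_pmf.expectation (ER n p) (\<lambda>G. ((2 * y / (3 * mm n * p)) * Dsum n p G + (1 / (3 * mm n * p\<^sup>2)) * Wsum n p G)\<^sup>2)"
    by simp
  also have "\<dots> \<le> 2 * (2 * y / (3 * mm n * p))\<^sup>2 * EE n p (Dsum n p) + 2 * (1 / (3 * mm n * p\<^sup>2))\<^sup>2 * EE n p (Wsum n p)"
    by (rule Esq2)
  also have "\<dots> \<le> 2 * (2 * y / (3 * mm n * p))\<^sup>2 * (NN n * (p * (1 - p))) + 2 * (1 / (3 * mm n * p\<^sup>2))\<^sup>2 * (4 * mm n)"
    unfolding ED using EW c1 by (intro add_left_mono mult_left_mono) auto
  finally show "EE n p (vv n p) \<le> 2 * (2 * y / (3 * mm n * p))\<^sup>2 * (NN n * (p * (1 - p))) + 2 * (1 / (3 * mm n * p\<^sup>2))\<^sup>2 * (4 * mm n)" .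
  have "RR n p G = (1 / (mm n * p ^ 3)) * Usum n p G + (- (1 / (3 * mm n * p\<^sup>2))) * Wsum n p G" for G
    unfolding RR_def by simp
  hence "EE n p (RR n p) = measure_pmf.expectation (ER n p) (\<lambda>G. ((1 / (mm n * p ^ 3)) * Usum n p G + (- (1 / (3 * mm n * p\<^sup>2))) * Wsum n p G)\<^sup>2)"
    by simp
  also have "\<dots> \<le> 2 * (1 / (mm n * p ^ 3))\<^sup>2 * EE n p (Usum n p) + 2 * (- (1 / (3 * mm n * p\<^sup>2)))\<^sup>2 * EE n p (Wsum n p)"
    by (rule Esq2)
  also have "\<dots> = 2 * (1 / (mm n * p ^ 3))\<^sup>2 * EE n p (Usum n p) + 2 * (1 / (3 * mm n * p\<^sup>2))\<^sup>2 * EE n p (Wsum n p)"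
    by (simp only: power2_minus)
  also have "\<dots> \<le> 2 * (1 / (mm n * p ^ 3))\<^sup>2 * (4 * mm n) + 2 * (1 / (3 * mm n * p\<^sup>2))\<^sup>2 * (4 * mm n)"
    by (intro add_mono mult_left_mono EU EW c1)
  finally show "EE n p (RR n p) \<le> 2 * (1 / (mm n * p ^ 3))\<^sup>2 * (4 * mm n) + 2 * (1 / (3 * mm n * p\<^sup>2))\<^sup>2 * (4 * mm n)" .
  show "EE n p (\<lambda>G. cc n p * Dsum n p G) = (cc n p)\<^sup>2 * (NN n * (p * (1 - p)))"
    using ED by (simp add: power_mult_distrib)
qed


lemma s2_lower:
  fixes y p q a m s2 b :: real
  assumes y: "y \<ge> 1" and p: "0 < p" and qp: "q > 0" and ap: "a > 0" and m: "m = a * y / 6"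
    and b: "b \<ge> 0" and s2: "s2 = (q / m) * (y / (3 * p\<^sup>2) + b)"
  shows "s2 \<ge> 2 * q / (p\<^sup>2 * a)"
proof -
  have yp: "y > 0" using y by simp
  have mp: "m > 0" unfolding m using ap yp by simp
  have "q / m * (y / (3 * p\<^sup>2)) = 2 * q / (p\<^sup>2 * a)" unfolding m using yp ap p by (simp add: field_simps power2_eq_square)
  moreover have "q / m * (y / (3 * p\<^sup>2)) \<le> q / m * (y / (3 * p\<^sup>2) + b)" using qp mp b by (intro mult_left_mono) auto
  ultimately show ?thesis unfolding s2 by simp
qed

definition Ktot :: "real \<Rightarrow> real \<Rightarrow> real" where
  "Ktot p e = (let q = p * (1 - p); Ku = 36 * q / p\<^sup>2 + 48 / p ^ 6; b = (1 - p) * (3 + p) / (3 * p ^ 4) in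
     8 * Ku + 2 * (8 * Ku * p / (e * sqrt (q / 3))) + 16 * (9 * p\<^sup>2 * b / 3) / e\<^sup>2 + 768 / (q * e\<^sup>2 * p ^ 4))"

lemma final_bound:
  assumes n: "n \<ge> 3" and p: "0 < p" "p < 1" and e: "e > 0"
  shows "measure_pmf.prob (ER n p) {G. e < \<bar>Yf n p G - Zf n p G\<bar>} \<le> Ktot p e / (real n - 2)"
proof -
  define y where "y = real n - 2"
  define a where "a = real n * (real n - 1)"
  define q where "q = p * (1 - p)"
  define Ku where "Ku = 36 * q / p\<^sup>2 + 48 / p ^ 6"
  define b where "b = (1 - p) * (3 + p) / (3 * p ^ 4)"
  note B = EE_bounds[OF n p, folded y_def a_def]
  have yp: "y \<ge> 1" using B(5) .
  have ap: "a > 0" using B(3) yp by (smt (verit) one_le_power)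
  have qp: "q > 0" using p by (simp add: q_def)
  have b0: "b \<ge> 0" using p by (simp add: b_def)
  have Ku0: "Ku \<ge> 0" using qp p by (simp add: Ku_def)
  have s2: "sigma_sq n p = (q / mm n) * (y / (3 * p\<^sup>2) + b)"
    unfolding sigma_sq_eq[OF n p(1)] q_def y_def b_def ..
  have s2l: "sigma_sq n p \<ge> 2 * q / (p\<^sup>2 * a)"
    by (rule s2_lower[OF yp p(1) qp ap B(1) b0 s2])
  have Eu: "EE n p (uu n p) \<le> Ku / y\<^sup>2"
    using order_trans[OF B(6) Eu_alg[OF yp p B(3) B(1) B(2) q_def[unfolded q_def]]] unfolding Ku_def q_def .
  have Ev: "EE n p (vv n p) \<le> Ku / y\<^sup>2"
    using order_trans[OF B(7) Ev_alg[OF yp p B(3) B(1) B(2) q_def[unfolded q_def]]] unfolding Ku_def q_def .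
  have Eu0: "EE n p (uu n p) \<ge> 0" "EE n p (vv n p) \<ge> 0" by simp_all
  have t3: "EE n p (uu n p) / (e * sig n p / 8) \<le> (8 * Ku * p / (e * sqrt (q / 3))) / y"
    unfolding sig_def by (rule Eu_sig_alg[OF yp p(1) qp B(4) ap e s2l Eu Eu0(1)])
  have t4: "EE n p (vv n p) / (e * sig n p / 8) \<le> (8 * Ku * p / (e * sqrt (q / 3))) / y"
    unfolding sig_def by (rule Eu_sig_alg[OF yp p(1) qp B(4) ap e s2l Ev Eu0(2)])
  have t5: "EE n p (\<lambda>G. cc n p * Dsum n p G) / (e / 4)\<^sup>2 \<le> 16 * (9 * p\<^sup>2 * b / (3 * y)) / e\<^sup>2"
  proof -
    have "(cc n p)\<^sup>2 * (NN n * q) \<le> 9 * p\<^sup>2 * b / (3 * y)"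
      unfolding cc_def sig_def y_def[symmetric] q_def[symmetric]
      by (rule cc_alg[OF yp p(1) qp ap B(1) B(2) b0 s2])
    hence "16 * ((cc n p)\<^sup>2 * (NN n * q)) / e\<^sup>2 \<le> 16 * (9 * p\<^sup>2 * b / (3 * y)) / e\<^sup>2"
      by (intro divide_right_mono mult_left_mono) auto
    moreover have "(cc n p)\<^sup>2 * (NN n * q) / (e / 4)\<^sup>2 = 16 * ((cc n p)\<^sup>2 * (NN n * q)) / e\<^sup>2"
      by (simp add: power_divide)
    ultimately show ?thesis unfolding B(9) q_def[symmetric] by simp
  qed
  have t6: "EE n p (RR n p) / (e * sig n p / 4)\<^sup>2 \<le> (768 / (q * e\<^sup>2 * p ^ 4)) / y"
    unfolding sig_def by (rule ER_alg[OF yp p B(3) B(1) q_def e b0 s2 B(8)])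
  have y2: "Ku / y\<^sup>2 \<le> Ku / y"
    by (rule divide_left_mono) (use yp Ku0 in \<open>auto simp: power2_eq_square\<close>)
  have "measure_pmf.prob (ER n p) {G. e < \<bar>Yf n p G - Zf n p G\<bar>} \<le>
     4 * (Ku / y) + 4 * (Ku / y) + (8 * Ku * p / (e * sqrt (q / 3))) / y + (8 * Ku * p / (e * sqrt (q / 3))) / y
     + 16 * (9 * p\<^sup>2 * b / (3 * y)) / e\<^sup>2 + (768 / (q * e\<^sup>2 * p ^ 4)) / y"
    using prob_bound[OF n p e] Eu Ev t3 t4 t5 t6 y2 by linarith
  also have "\<dots> = Ktot p e / y"
    unfolding Ktot_def Let_def Ku_def[symmetric] q_def[symmetric] b_def[symmetric]
    using yp e by (simp add: field_simps)
  finally show ?thesis by (simp add: y_def)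
qed


lemma remainder_lim:
  assumes p: "0 < p" "p < 1" and e: "e > 0"
  shows "(\<lambda>n. measure_pmf.prob (ER n p) {G. e < \<bar>Yf n p G - Zf n p G\<bar>}) \<longlonglongrightarrow> 0"
proof (rule tendsto_sandwich[of "\<lambda>_. 0" _ _ "\<lambda>n. Ktot p e / (real n - 2)"])
  show "\<forall>\<^sub>F n in sequentially. 0 \<le> measure_pmf.prob (ER n p) {G. e < \<bar>Yf n p G - Zf n p G\<bar>}" by simp
  show "\<forall>\<^sub>F n in sequentially. measure_pmf.prob (ER n p) {G. e < \<bar>Yf n p G - Zf n p G\<bar>} \<le> Ktot p e / (real n - 2)"
    using final_bound[OF _ p e] by (intro eventually_sequentiallyI[of 3]) auto
  show "(\<lambda>_. 0) \<longlonglongrightarrow> (0::real)" by simp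
  have "filterlim (\<lambda>n. -2 + real n) at_top sequentially"
    by (rule filterlim_tendsto_add_at_top[OF tendsto_const filterlim_real_sequentially])
  hence "filterlim (\<lambda>n. real n - 2) at_infinity sequentially"
    by (intro filterlim_at_top_imp_at_infinity) simp
  thus "(\<lambda>n. Ktot p e / (real n - 2)) \<longlonglongrightarrow> 0"
    by (rule tendsto_divide_0[OF tendsto_const])
qed

theorem theorem1:
  fixes p :: real
  assumes "0 < p" and "p < 1"
  shows "weak_conv_m
           (\<lambda>n. distr (measure_pmf (ER n p)) borel
                  (\<lambda>G. (ln (clustering n G) - ln p) / sqrt (sigma_sq n p)))
           std_normal_distribution"
  unfolding weak_conv_m_def weak_conv_def
proof (intro allI impI)
  fix x :: real
  have cdf_eq: "cdf (distr (measure_pmf (ER n p)) borel (\<lambda>G. (ln (clustering n G) - ln p) / sqrt (sigma_sq n p))) x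
      = measure_pmf.prob (ER n p) {G. Yf n p G \<le> x}" for n
  proof -
    have "cdf (distr (measure_pmf (ER n p)) borel (\<lambda>G. (ln (clustering n G) - ln p) / sqrt (sigma_sq n p))) x =
      measure (measure_pmf (ER n p)) ((\<lambda>G. (ln (clustering n G) - ln p) / sqrt (sigma_sq n p)) -` {..x} \<inter> space (measure_pmf (ER n p)))"
      unfolding cdf_def by (rule measure_distr) auto
    also have "(\<lambda>G. (ln (clustering n G) - ln p) / sqrt (sigma_sq n p)) -` {..x} \<inter> space (measure_pmf (ER n p)) = {G. Yf n p G \<le> x}"
      by (auto simp: Yf_def sig_def)
    finally show ?thesis .
  qed
  have "(\<lambda>n. measure_pmf.prob (ER n p) {G. Yf n p G \<le> x}) \<longlonglongrightarrow> cdf std_normal_distribution x"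
  proof (rule slutsky[where Z = "\<lambda>n. Zf n p"])
    show "isCont (cdf std_normal_distribution) y" for y by (rule std_normal_cont)
    show "(\<lambda>n. measure_pmf.prob (ER n p) {G. Zf n p G \<le> y}) \<longlonglongrightarrow> cdf std_normal_distribution y" for y
      using ER_clt[OF assms, of y] by (simp add: Zf_def NN_def)
    show "(\<lambda>n. measure_pmf.prob (ER n p) {G. e < \<bar>Yf n p G - Zf n p G\<bar>}) \<longlonglongrightarrow> 0" if "e > 0" for e
      by (rule remainder_lim[OF assms that])
  qed
  thus "(\<lambda>n. cdf (distr (measure_pmf (ER n p)) borel (\<lambda>G. (ln (clustering n G) - ln p) / sqrt (sigma_sq n p))) x)
        \<longlonglongrightarrow> cdf std_normal_distribution x"
    unfolding cdf_eq .
qed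


end
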